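(* Let $G$ be a planar trivalent graph and let $M$ be a perfect matching of $G$. Then $$\langle G:M\rangle_2(1) = |G:M|_2,$$ i.e. the $2$-factor polynomial of $(G,M)$ evaluated at $z=1$ equals the number of $2$-factors of $G$ that contain every edge of $M$.
   Context: Graphs are finite and may have multiple edges; a trivalent graph is one in which every vertex has degree $3$. A $2$-factor of $G$ is a spanning subgraph in which every vertex has degree $2$. Write $[G:M]_2$ for the set of $2$-factors of $G$ containing $M$ as a subgraph, and $|G:M|_2$ for its cardinality. The $2$-factor polynomial is defined as follows. A perfect matching drawing $\Gamma$ is a collection of trivalent vertices, edges and vertex-free closed curves drawn in the $2$-sphere by a generic immersion (edges and curves may cross transversally at finitely many double points away from vertices; crossings carry no extra data), together with a set $M$ of edges forming a perfect matching of the vertices. For a matching edge $e=uv$, let $\alpha,\beta$ be the other two edge-ends at $u$ and $\gamma,\delta$ the other two edge-ends at $v$, labelled so that in a small disk around $e$ the four edge-ends appear in the cyclic order $\alpha,\beta,\delta,\gamma$. The $0$-resolution at $e$ deletes $e,u,v$ and joins $\alpha$ to $\gamma$ and $\beta$ to $\delta$ by two disjoint arcs inside the disk; the $1$-resolution instead joins $\alpha$ to $\delta$ and $\beta$ to $\gamma$ by two arcs crossing once. A state $s$ assigns $0$ or $1$ to every edge of $M$; performing the corresponding resolutions at all matching edges gives a collection of $c(s)$ immersed closed curves. The $2$-factor bracket is $$\langle \Gamma\rangle_2(z)=\sum_{s}(-z)^{|s|}(z+z^{-1})^{c(s)}\in\mathbb{Z}[z,z^{-1}],$$ where $|s|$ is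 the number of edges assigned $1$. Equivalently, $\langle\Gamma\rangle_2=\langle\Gamma_0\rangle_2-z\langle\Gamma_1\rangle_2$ for the $0$- and $1$-resolutions $\Gamma_0,\Gamma_1$ at any matching edge, each vertex-free closed curve contributes a factor $z+z^{-1}$, and the bracket is multiplicative under disjoint union. For a planar trivalent graph $G$ with perfect matching $M$, the $2$-factor polynomial $\langle G:M\rangle_2(z)$ is $\langle\Gamma\rangle_2(z)$ for any embedding $\Gamma$ of $G$ in the $2$-sphere with the edges of $M$ marked (this does not depend on the embedding). *)

theory Defs
  imports Complex_Main
begin

text \<open>Graphs with multiple edges and loops are encoded by half-edges (darts):
  H is the finite set of darts, alpha the fixed-point-free involution pairing
  the two darts of an edge, vert d the vertex at which dart d is attached.\<close>

definition half_edge_graph :: "'d set \<Rightarrow> ('d \<Rightarrow> 'd) \<Rightarrow> bool" where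
  "half_edge_graph H alpha \<longleftrightarrow> finite H \<and>
     (\<forall>d\<in>H. alpha d \<in> H \<and> alpha d \<noteq> d \<and> alpha (alpha d) = d)"

definition darts_at :: "'d set \<Rightarrow> ('d \<Rightarrow> 'v) \<Rightarrow> 'v \<Rightarrow> 'd set" where
  "darts_at H vert v = {d \<in> H. vert d = v}"

definition graph_edges :: "'d set \<Rightarrow> ('d \<Rightarrow> 'd) \<Rightarrow> 'd set set" where
  "graph_edges H alpha = {{d, alpha d} | d. d \<in> H}"

text \<open>Degree of vertex v in the spanning subgraph with edge set F (a loop counts twice).\<close>
definition sub_degree :: "'d set set \<Rightarrow> ('d \<Rightarrow> 'v) \<Rightarrow> 'v \<Rightarrow> nat" where
  "sub_degree F vert v = card (darts_at (\<Union>F) vert v)"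

definition trivalent :: "'d set \<Rightarrow> ('d \<Rightarrow> 'v) \<Rightarrow> bool" where
  "trivalent H vert \<longleftrightarrow> (\<forall>v\<in>vert ` H. card (darts_at H vert v) = 3)"

definition perfect_matching :: "'d set \<Rightarrow> ('d \<Rightarrow> 'd) \<Rightarrow> ('d \<Rightarrow> 'v) \<Rightarrow> 'd set set \<Rightarrow> bool" where
  "perfect_matching H alpha vert M \<longleftrightarrow> M \<subseteq> graph_edges H alpha \<and>
     (\<forall>v\<in>vert ` H. sub_degree M vert v = 1)"

definition two_factors_containing :: "'d set \<Rightarrow> ('d \<Rightarrow> 'd) \<Rightarrow> ('d \<Rightarrow> 'v) \<Rightarrow> 'd set set \<Rightarrow> 'd set set set" where
  "two_factors_containing H alpha vert M =
     {F. F \<subseteq> graph_edges H alpha \<and> (\<forall>v\<in>vert ` H. sub_degree F vert v = 2) \<and> M \<subseteq> F}"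

text \<open>Embeddings in the sphere are encoded combinatorially by rotation systems:
  sigma maps each dart to the next dart counterclockwise around its vertex.\<close>
definition rotation_system :: "'d set \<Rightarrow> ('d \<Rightarrow> 'v) \<Rightarrow> ('d \<Rightarrow> 'd) \<Rightarrow> bool" where
  "rotation_system H vert sigma \<longleftrightarrow> bij_betw sigma H H \<and>
     (\<forall>d\<in>H. {(sigma ^^ n) d | n. True} = darts_at H vert (vert d))"

definition perm_orbits :: "'d set \<Rightarrow> ('d \<Rightarrow> 'd) \<Rightarrow> 'd set set" where
  "perm_orbits H f = {{(f ^^ n) d | n. True} | d. d \<in> H}"

definition map_components :: "'d set \<Rightarrow> ('d \<Rightarrow> 'd) \<Rightarrow> ('d \<Rightarrow> 'd) \<Rightarrow> 'd set set" where
  "map_components H alpha sigma =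
     H // (({(d, alpha d) | d. d \<in> H} \<union> {(alpha d, d) | d. d \<in> H}
           \<union> {(d, sigma d) | d. d \<in> H} \<union> {(sigma d, d) | d. d \<in> H})\<^sup>*)"

text \<open>Planar (genus 0) rotation system: Euler's formula V - E + F = 2 on every
  connected component, i.e. V - E + F = 2 * (number of components); faces are the
  orbits of sigma o alpha.\<close>
definition planar_rotation_system :: "'d set \<Rightarrow> ('d \<Rightarrow> 'd) \<Rightarrow> ('d \<Rightarrow> 'v) \<Rightarrow> ('d \<Rightarrow> 'd) \<Rightarrow> bool" where
  "planar_rotation_system H alpha vert sigma \<longleftrightarrow> rotation_system H vert sigma \<and>
     int (card (vert ` H)) - int (card (graph_edges H alpha))
       + int (card (perm_orbits H (sigma \<circ> alpha)))
     = 2 * int (card (map_components H alpha sigma))"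

text \<open>For a non-matching dart d at vertex u, let m be
  the matching dart at u and m' = alpha m the matching dart at the other end v.
  With alpha = sigma m, beta = sigma^2 m, delta = sigma m', gamma = sigma^2 m'
  (cyclic order alpha, beta, delta, gamma around the edge), the 0-resolution
  joins alpha-gamma and beta-delta, the 1-resolution alpha-delta and beta-gamma.
  S is the set of matching edges assigned 1.\<close>
definition res_partner :: "('d \<Rightarrow> 'd) \<Rightarrow> ('d \<Rightarrow> 'v) \<Rightarrow> ('d \<Rightarrow> 'd) \<Rightarrow> 'd set set \<Rightarrow> 'd set set \<Rightarrow> 'd \<Rightarrow> 'd" where
  "res_partner alpha vert sigma M S d =
     (let m = (THE m. m \<in> \<Union>M \<and> vert m = vert d); m' = alpha m; b = ({m, m'} \<in> S) in
      if d = sigma m then (if b then sigma m' else sigma (sigma m'))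
      else (if b then sigma (sigma m') else sigma m'))"

text \<open>Number c(s) of closed curves of the state S: connected components of the
  non-matching darts linked by the remaining edges and by the resolution arcs.\<close>
definition num_curves :: "'d set \<Rightarrow> ('d \<Rightarrow> 'd) \<Rightarrow> ('d \<Rightarrow> 'v) \<Rightarrow> ('d \<Rightarrow> 'd) \<Rightarrow> 'd set set \<Rightarrow> 'd set set \<Rightarrow> nat" where
  "num_curves H alpha vert sigma M S =
     (let N = H - \<Union>M; r = res_partner alpha vert sigma M S in
      card (N // (({(d, alpha d) | d. d \<in> N} \<union> {(alpha d, d) | d. d \<in> N}
                  \<union> {(d, r d) | d. d \<in> N} \<union> {(r d, d) | d. d \<in> N})\<^sup>*)))"

definition two_factor_bracket :: "'d set \<Rightarrow> ('d \<Rightarrow> 'd) \<Rightarrow> ('d \<Rightarrow> 'v) \<Rightarrow> ('d \<Rightarrow> 'd) \<Rightarrow> 'd set set \<Rightarrow> real \<Rightarrow> real" where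
  "two_factor_bracket H alpha vert sigma M z =
     (\<Sum>S\<in>Pow M. (- z) ^ card S * (z + inverse z) ^ num_curves H alpha vert sigma M S)"

end

theory Submission
  imports Defs "HOL-Library.FuncSet"
begin

definition symc :: "('a \<times> 'a) set \<Rightarrow> ('a \<times> 'a) set" where
  "symc R = (R \<union> R\<inverse>)\<^sup>*"
lemma symc_refl[simp]: "(x, x) \<in> symc R"
  by (simp add: symc_def)

lemma symc_sym: "(x, y) \<in> symc R \<Longrightarrow> (y, x) \<in> symc R"
proof -
  assume "(x, y) \<in> symc R"
  hence "(y, x) \<in> ((R \<union> R\<inverse>)\<^sup>*)\<inverse>" by (simp add: symc_def)
  hence "(y, x) \<in> ((R \<union> R\<inverse>)\<inverse>)\<^sup>*" by (simp add: rtrancl_converse)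
  moreover have "(R \<union> R\<inverse>)\<inverse> = R \<union> R\<inverse>" by auto
  ultimately show ?thesis by (simp add: symc_def)
qed

lemma symc_trans: "(x, y) \<in> symc R \<Longrightarrow> (y, z) \<in> symc R \<Longrightarrow> (x, z) \<in> symc R"
  by (simp add: symc_def)

lemma symc_base: "(x, y) \<in> R \<Longrightarrow> (x, y) \<in> symc R"
  by (auto simp: symc_def)

lemma symc_base': "(x, y) \<in> R \<Longrightarrow> (y, x) \<in> symc R"
  by (auto simp: symc_def)

lemma symc_mono: "R \<subseteq> R' \<Longrightarrow> symc R \<subseteq> symc R'"
  unfolding symc_def by (rule rtrancl_mono) auto

lemma symc_sub: assumes "R \<subseteq> symc R'" shows "symc R \<subseteq> symc R'"
proof
  fix p assume "p \<in> symc R"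
  then obtain x y where p: "p = (x, y)" and "(x, y) \<in> (R \<union> R\<inverse>)\<^sup>*" by (cases p) (auto simp: symc_def)
  from this(2) have "(x, y) \<in> symc R'"
  proof (induction rule: rtrancl_induct)
    case base then show ?case by simp
  next
    case (step y z)
    from step(2) have "(y, z) \<in> R \<or> (z, y) \<in> R" by auto
    then have "(y, z) \<in> symc R'" 
    proof
      assume "(y, z) \<in> R" then show ?thesis using assms by blast
    next
      assume "(z, y) \<in> R" then have "(z, y) \<in> symc R'" using assms by blast
      then show ?thesis by (rule symc_sym)
    qed
    with step(3) show ?case by (rule symc_trans)
  qed
  then show "p \<in> symc R'" using p by simp
qed

lemma symc_eqI: "R \<subseteq> symc R' \<Longrightarrow> R' \<subseteq> symc R \<Longrightarrow> symc R = symc R'"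
  using symc_sub by (metis subset_antisym)

lemma symc_insert:
  "(x, y) \<in> symc (insert (a, b) R) \<longleftrightarrow>
     (x, y) \<in> symc R \<or> ((x, a) \<in> symc R \<and> (b, y) \<in> symc R) \<or> ((x, b) \<in> symc R \<and> (a, y) \<in> symc R)"
  (is "?L \<longleftrightarrow> ?R")
proof
  assume ?L
  hence "(x, y) \<in> (insert (a, b) R \<union> (insert (a, b) R)\<inverse>)\<^sup>*" by (simp add: symc_def)
  then show ?R
  proof (induction rule: rtrancl_induct)
    case base then show ?case by simp
  next
    case (step y z)
    have "(y, z) \<in> R \<or> (z, y) \<in> R \<or> (y = a \<and> z = b) \<or> (y = b \<and> z = a)"
      using step(2) by auto
    then have yz: "(y, z) \<in> symc R \<or> (y = a \<and> z = b) \<or> (y = b \<and> z = a)"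
      using symc_base[of y z R] symc_base'[of z y R] by blast
    from yz show ?case
    proof (elim disjE conjE)
      assume "(y, z) \<in> symc R"
      with step(3) show ?thesis using symc_trans[of x y R z] symc_trans[of b y R z] symc_trans[of a y R z] by (elim disjE conjE) auto
    next
      assume "y = a" "z = b"
      with step(3) show ?thesis by auto
    next
      assume "y = b" "z = a"
      with step(3) show ?thesis by auto
    qed
  qed
next
  let ?R' = "insert (a, b) R"
  have sub: "symc R \<subseteq> symc ?R'" by (rule symc_mono) auto
  have ab: "(a, b) \<in> symc ?R'" by (rule symc_base) simp
  have ba: "(b, a) \<in> symc ?R'" using ab by (rule symc_sym)
  assume ?R
  then show ?L
  proof (elim disjE conjE)
    assume "(x, y) \<in> symc R" then show ?thesis using sub by blast
  next
    assume h: "(x, a) \<in> symc R" "(b, y) \<in> symc R"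
    have 1: "(x, a) \<in> symc ?R'" using h(1) sub by blast
    have 2: "(b, y) \<in> symc ?R'" using h(2) sub by blast
    show ?thesis by (rule symc_trans[OF symc_trans[OF 1 ab] 2])
  next
    assume h: "(x, b) \<in> symc R" "(a, y) \<in> symc R"
    have 1: "(x, b) \<in> symc ?R'" using h(1) sub by blast
    have 2: "(a, y) \<in> symc ?R'" using h(2) sub by blast
    show ?thesis by (rule symc_trans[OF symc_trans[OF 1 ba] 2])
  qed
qed


definition cls :: "('a \<times> 'a) set \<Rightarrow> 'a \<Rightarrow> 'a set" where
  "cls R x = symc R `` {x}"

lemma quotient_cls: "A // symc R = cls R ` A"
  by (auto simp: quotient_def cls_def)

lemma in_cls: "y \<in> cls R x \<longleftrightarrow> (x, y) \<in> symc R"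
  by (simp add: cls_def)

lemma cls_eq_iff: "cls R x = cls R y \<longleftrightarrow> (x, y) \<in> symc R"
proof
  assume "cls R x = cls R y"
  moreover have "y \<in> cls R y" by (simp add: in_cls)
  ultimately have "y \<in> cls R x" by simp
  then show "(x, y) \<in> symc R" by (simp add: in_cls)
next
  assume xy: "(x, y) \<in> symc R"
  then have yx: "(y, x) \<in> symc R" by (rule symc_sym)
  show "cls R x = cls R y"
  proof (rule set_eqI)
    fix z
    show "z \<in> cls R x \<longleftrightarrow> z \<in> cls R y"
      unfolding in_cls using symc_trans[OF xy, of z] symc_trans[OF yx, of z] by blast
  qed
qed

definition qn :: "'a set \<Rightarrow> ('a \<times> 'a) set \<Rightarrow> nat" where
  "qn A R = card (A // symc R)"

lemma symc_subI: "R \<subseteq> symc R"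
proof
  fix p assume "p \<in> R" then show "p \<in> symc R" by (cases p) (simp add: symc_base)
qed

lemma qn_insert_old: assumes "(a, b) \<in> symc R" shows "symc (insert (a, b) R) = symc R"
proof (rule symc_eqI)
  show "insert (a, b) R \<subseteq> symc R" using assms symc_subI[of R] by (rule insert_subsetI)
  have "R \<subseteq> insert (a, b) R" by (rule subset_insertI)
  then show "R \<subseteq> symc (insert (a, b) R)" using symc_subI[of "insert (a, b) R"] by (rule subset_trans)
qed

lemma qn_insert_new:
  assumes fin: "finite A" and a: "a \<in> A" and b: "b \<in> A" and nab: "(a, b) \<notin> symc R"
  shows "qn A (insert (a, b) R) + 1 = qn A R"
proof -
  let ?R' = "insert (a, b) R"
  define U where "U = cls R a \<union> cls R b"
  have nba: "(b, a) \<notin> symc R" using nab symc_sym[of b a R] by blast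
  have cls': "cls ?R' x = (if x \<in> U then U else cls R x)" for x
  proof (rule set_eqI)
    fix y
    have "y \<in> cls ?R' x \<longleftrightarrow> (x, y) \<in> symc R \<or> ((x, a) \<in> symc R \<and> (b, y) \<in> symc R) \<or> ((x, b) \<in> symc R \<and> (a, y) \<in> symc R)"
      by (simp add: in_cls symc_insert)
    also have "\<dots> \<longleftrightarrow> y \<in> (if x \<in> U then U else cls R x)"
    proof (cases "(a, x) \<in> symc R")
      case True
      then have xa: "(x, a) \<in> symc R" by (rule symc_sym)
      have nxb: "(x, b) \<notin> symc R" using nab symc_trans[OF True, of b] by blast
      have xU: "x \<in> U" unfolding U_def using True by (simp add: in_cls)
      have "(x, y) \<in> symc R \<longleftrightarrow> (a, y) \<in> symc R"
        using symc_trans[OF True, of y] symc_trans[OF xa, of y] by blast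
      then show ?thesis using xU nxb xa by (auto simp: U_def in_cls)
    next
      case F1: False
      then have nxa: "(x, a) \<notin> symc R" using symc_sym[of x a R] by blast
      show ?thesis
      proof (cases "(b, x) \<in> symc R")
        case True
        then have xb: "(x, b) \<in> symc R" by (rule symc_sym)
        have xU: "x \<in> U" unfolding U_def using True by (simp add: in_cls)
        have "(x, y) \<in> symc R \<longleftrightarrow> (b, y) \<in> symc R"
          using symc_trans[OF True, of y] symc_trans[OF xb, of y] by blast
        then show ?thesis using xU nxa xb by (auto simp: U_def in_cls)
      next
        case False
        then have nxb: "(x, b) \<notin> symc R" using symc_sym[of x b R] by blast
        have "x \<notin> U" using F1 False by (simp add: U_def in_cls)
        then show ?thesis using nxa nxb by (simp add: in_cls)
      qed
    qed
    finally show "y \<in> cls ?R' x \<longleftrightarrow> y \<in> (if x \<in> U then U else cls R x)" .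
  qed
  have ne: "cls R a \<noteq> cls R b" using nab cls_eq_iff[of R a b] by blast
  have clsU: "x \<in> U \<Longrightarrow> cls R x = cls R a \<or> cls R x = cls R b" for x
  proof -
    assume "x \<in> U"
    then have "(a, x) \<in> symc R \<or> (b, x) \<in> symc R" by (simp add: U_def in_cls)
    then have "cls R a = cls R x \<or> cls R b = cls R x" using cls_eq_iff[of R a x] cls_eq_iff[of R b x] by blast
    then show ?thesis by auto
  qed
  have notU: "x \<notin> U \<Longrightarrow> cls R x \<noteq> cls R a \<and> cls R x \<noteq> cls R b" for x
  proof -
    assume "x \<notin> U"
    then have "(a, x) \<notin> symc R" "(b, x) \<notin> symc R" by (simp_all add: U_def in_cls)
    then show ?thesis using cls_eq_iff[of R a x] cls_eq_iff[of R b x] by auto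
  qed
  have img: "cls ?R' ` A = insert U (cls R ` A - {cls R a, cls R b})"
  proof (rule set_eqI, rule iffI)
    fix C assume "C \<in> cls ?R' ` A"
    then obtain x where x: "x \<in> A" "C = cls ?R' x" by auto
    show "C \<in> insert U (cls R ` A - {cls R a, cls R b})"
    proof (cases "x \<in> U")
      case True then show ?thesis using x cls' by simp
    next
      case False
      then show ?thesis using x cls' notU[OF False] by auto
    qed
  next
    fix C assume C: "C \<in> insert U (cls R ` A - {cls R a, cls R b})"
    show "C \<in> cls ?R' ` A"
    proof (cases "C = U")
      case True
      have "a \<in> U" unfolding U_def by (simp add: in_cls)
      then have "cls ?R' a = U" using cls' by simp
      then show ?thesis using True a by blast
    next
      case False
      then obtain x where x: "x \<in> A" "C = cls R x" "cls R x \<noteq> cls R a" "cls R x \<noteq> cls R b" using C by auto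
      have "x \<notin> U" using x(3,4) clsU by blast
      then have "cls ?R' x = C" using x cls' by simp
      then show ?thesis using x(1) by blast
    qed
  qed
  have Unot: "U \<notin> cls R ` A - {cls R a, cls R b}"
  proof
    assume "U \<in> cls R ` A - {cls R a, cls R b}"
    then obtain x where x: "x \<in> A" "U = cls R x" "cls R x \<noteq> cls R a" "cls R x \<noteq> cls R b" by auto
    have "x \<in> U" using x(2) by (simp add: in_cls)
    then show False using clsU x(3,4) by blast
  qed
  have fin2: "finite (cls R ` A)" using fin by simp
  have sub2: "{cls R a, cls R b} \<subseteq> cls R ` A" using a b by auto
  have c2: "card {cls R a, cls R b} = 2" using ne by simp
  have "qn A ?R' = card (insert U (cls R ` A - {cls R a, cls R b}))"
    unfolding qn_def quotient_cls img ..
  also have "\<dots> = card (cls R ` A - {cls R a, cls R b}) + 1"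
    using Unot fin2 by simp
  finally have e1: "qn A ?R' = card (cls R ` A - {cls R a, cls R b}) + 1" .
  have e2: "card (cls R ` A - {cls R a, cls R b}) + 2 = card (cls R ` A)"
    using card_Diff_subset[OF _ sub2] card_mono[OF fin2 sub2] c2 fin2 by (simp add: finite_subset[OF sub2])
  show ?thesis using e1 e2 unfolding qn_def quotient_cls by simp
qed

lemma qn_insert_le: assumes "finite A" "a \<in> A" "b \<in> A" shows "qn A (insert (a, b) R) \<le> qn A R"
proof (cases "(a, b) \<in> symc R")
  case True then show ?thesis by (simp add: qn_def qn_insert_old)
next
  case False then show ?thesis using qn_insert_new[OF assms False] by simp
qed

lemma qn_insert_ge: assumes "finite A" "a \<in> A" "b \<in> A" shows "qn A R \<le> qn A (insert (a, b) R) + 1"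
proof (cases "(a, b) \<in> symc R")
  case True then show ?thesis by (simp add: qn_def qn_insert_old)
next
  case False then show ?thesis using qn_insert_new[OF assms False] by simp
qed

definition Rel :: "'a set \<Rightarrow> ('a \<Rightarrow> 'a) \<Rightarrow> ('a \<times> 'a) set" where
  "Rel A f = {(x, f x) | x. x \<in> A}"

lemma Rel_iff: "(x, y) \<in> Rel A f \<longleftrightarrow> x \<in> A \<and> y = f x"
  by (auto simp: Rel_def)

lemma funpow_in: "f ` A \<subseteq> A \<Longrightarrow> y \<in> A \<Longrightarrow> (f ^^ n) y \<in> A"
  by (induction n) auto

lemma funpow_cancel:
  assumes inj: "inj_on f A" and im: "f ` A \<subseteq> A" and y: "y \<in> A"
    and eq: "(f ^^ i) y = (f ^^ (i + k)) y"
  shows "y = (f ^^ k) y"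
  using eq
proof (induction i)
  case 0 then show ?case by simp
next
  case (Suc i)
  have a: "(f ^^ i) y \<in> A" by (rule funpow_in[OF im y])
  have b: "(f ^^ (i + k)) y \<in> A" by (rule funpow_in[OF im y])
  have "f ((f ^^ i) y) = f ((f ^^ (i + k)) y)" using Suc.prems by simp
  then have "(f ^^ i) y = (f ^^ (i + k)) y" using inj a b by (simp add: inj_on_eq_iff)
  then show ?case by (rule Suc.IH)
qed

lemma period_exists:
  assumes fin: "finite A" and bij: "bij_betw f A A" and y: "y \<in> A"
  shows "\<exists>n>0. (f ^^ n) y = y"
proof -
  have im: "f ` A \<subseteq> A" using bij by (simp add: bij_betw_def)
  have inj: "inj_on f A" using bij by (simp add: bij_betw_def)
  have sub: "(\<lambda>k. (f ^^ k) y) ` {0..card A} \<subseteq> A" using funpow_in[OF im y] by auto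
  have "\<not> inj_on (\<lambda>k. (f ^^ k) y) {0..card A}"
  proof
    assume "inj_on (\<lambda>k. (f ^^ k) y) {0..card A}"
    then have "card ((\<lambda>k. (f ^^ k) y) ` {0..card A}) = card {0..card A}" by (rule card_image)
    also have "\<dots> = Suc (card A)" by simp
    finally have "Suc (card A) \<le> card A" using card_mono[OF fin sub] by simp
    then show False by simp
  qed
  then obtain a b where ab: "a \<in> {0..card A}" "b \<in> {0..card A}" "a \<noteq> b" "(f ^^ a) y = (f ^^ b) y"
    unfolding inj_on_def by blast
  show ?thesis
  proof (cases "a < b")
    case True
    then have "(f ^^ a) y = (f ^^ (a + (b - a))) y" using ab by simp
    then have "y = (f ^^ (b - a)) y" by (rule funpow_cancel[OF inj im y])
    then show ?thesis using True by (intro exI[of _ "b - a"]) simp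
  next
    case False
    then have "b < a" using ab by simp
    then have "(f ^^ b) y = (f ^^ (b + (a - b))) y" using ab by simp
    then have "y = (f ^^ (a - b)) y" by (rule funpow_cancel[OF inj im y])
    then show ?thesis using \<open>b < a\<close> by (intro exI[of _ "a - b"]) simp
  qed
qed

lemma funpow_rtrancl: "f ` A \<subseteq> A \<Longrightarrow> y \<in> A \<Longrightarrow> (y, (f ^^ k) y) \<in> (Rel A f)\<^sup>*"
proof (induction k)
  case 0 then show ?case by simp
next
  case (Suc k)
  have "(f ^^ k) y \<in> A" by (rule funpow_in[OF Suc.prems])
  then have "((f ^^ k) y, (f ^^ Suc k) y) \<in> Rel A f" by (simp add: Rel_iff)
  with Suc show ?case by (meson rtrancl.rtrancl_into_rtrancl)
qed

lemma rtrancl_symc: "(x, y) \<in> R\<^sup>* \<Longrightarrow> (x, y) \<in> symc R"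
proof -
  assume "(x, y) \<in> R\<^sup>*"
  moreover have "R\<^sup>* \<subseteq> (R \<union> R\<inverse>)\<^sup>*" by (rule rtrancl_mono) auto
  ultimately show ?thesis by (auto simp: symc_def)
qed

lemma cycle_edge:
  assumes fin: "finite A" and bij: "bij_betw f A A" and y: "y \<in> A"
    and D: "\<And>z. z \<in> A \<Longrightarrow> (z, f z) \<in> D \<Longrightarrow> z = y \<or> (y, z) \<notin> symc (Rel A f)"
  shows "(f y, y) \<in> symc (Rel A f - D)"
proof -
  have im: "f ` A \<subseteq> A" using bij by (simp add: bij_betw_def)
  define n where "n = (LEAST n. 0 < n \<and> (f ^^ n) y = y)"
  have ex: "\<exists>n. 0 < n \<and> (f ^^ n) y = y" using period_exists[OF fin bij y] by blast
  have n: "0 < n" "(f ^^ n) y = y" using LeastI_ex[OF ex] unfolding n_def by auto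
  have nmin: "0 < k \<Longrightarrow> k < n \<Longrightarrow> (f ^^ k) y \<noteq> y" for k
    using not_less_Least[of k "\<lambda>n. 0 < n \<and> (f ^^ n) y = y"] unfolding n_def by blast
  have step: "Suc k \<le> n \<Longrightarrow> (f y, (f ^^ Suc k) y) \<in> symc (Rel A f - D)" for k
  proof (induction k)
    case 0 then show ?case by simp
  next
    case (Suc k)
    define z where "z = (f ^^ Suc k) y"
    have zA: "z \<in> A" unfolding z_def by (rule funpow_in[OF im y])
    have zy: "z \<noteq> y" unfolding z_def using nmin[of "Suc k"] Suc.prems by simp
    have yz: "(y, z) \<in> symc (Rel A f)" unfolding z_def by (rule rtrancl_symc[OF funpow_rtrancl[OF im y]])
    have "(z, f z) \<notin> D" using D[OF zA] zy yz by blast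
    moreover have "(z, f z) \<in> Rel A f" using zA by (simp add: Rel_iff)
    ultimately have "(z, f z) \<in> Rel A f - D" by simp
    then have e: "(z, f z) \<in> symc (Rel A f - D)" by (rule symc_base)
    have ih: "(f y, z) \<in> symc (Rel A f - D)" unfolding z_def using Suc by simp
    have "f z = (f ^^ Suc (Suc k)) y" unfolding z_def by simp
    with symc_trans[OF ih e] show ?case by simp
  qed
  obtain m where m: "n = Suc m" using n(1) gr0_implies_Suc by blast
  have "(f y, (f ^^ Suc m) y) \<in> symc (Rel A f - D)" using step[of m] m by simp
  then show ?thesis using n(2) m by simp
qed

definition swp :: "'a \<Rightarrow> 'a \<Rightarrow> 'a \<Rightarrow> 'a" where
  "swp i j x = (if x = i then j else if x = j then i else x)"

lemma Rel_swap:
  assumes "i \<in> A" "j \<in> A" "i \<noteq> j"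
  shows "Rel A (f \<circ> swp i j) = insert (i, f j) (insert (j, f i) (Rel A f - {(i, f i), (j, f j)}))"
  using assms by (auto simp: Rel_def swp_def)

lemma perm_swap_qn:
  assumes fin: "finite A" and bij: "bij_betw f A A" and i: "i \<in> A" and j: "j \<in> A" and ij: "i \<noteq> j"
  shows "qn A (Rel A (f \<circ> swp i j)) \<le> qn A (Rel A f) + 1"
    and "(i, j) \<notin> symc (Rel A f) \<Longrightarrow> qn A (Rel A (f \<circ> swp i j)) + 1 \<le> qn A (Rel A f)"
proof -
  have im: "f ` A \<subseteq> A" using bij by (simp add: bij_betw_def)
  have fi: "f i \<in> A" and fj: "f j \<in> A" using im i j by auto
  define R0 where "R0 = Rel A f - {(i, f i), (j, f j)}"
  define R1 where "R1 = Rel A f - {(i, f i)}"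
  have R1eq: "R1 = insert (j, f j) R0" using ij j unfolding R0_def R1_def by (auto simp: Rel_iff)
  have "(f i, i) \<in> symc (Rel A f - {(i, f i)})"
    by (rule cycle_edge[OF fin bij i]) auto
  then have "(i, f i) \<in> symc R1" unfolding R1_def by (rule symc_sym)
  have s1: "symc R1 = symc (Rel A f)"
  proof (rule symc_eqI)
    show "R1 \<subseteq> symc (Rel A f)" unfolding R1_def using symc_subI[of "Rel A f"] by blast
    show "Rel A f \<subseteq> symc R1"
    proof
      fix p assume p: "p \<in> Rel A f"
      show "p \<in> symc R1"
      proof (cases "p = (i, f i)")
        case True then show ?thesis using \<open>(i, f i) \<in> symc R1\<close> by simp
      next
        case False then have "p \<in> R1" using p unfolding R1_def by simp
        then show ?thesis using symc_subI[of R1] by blast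
      qed
    qed
  qed
  have "qn A R0 \<le> qn A R1 + 1" unfolding R1eq by (rule qn_insert_ge[OF fin j fj])
  then have q0: "qn A R0 \<le> qn A (Rel A f) + 1" unfolding qn_def s1[unfolded qn_def] by (simp add: qn_def s1)
  have "qn A (Rel A (f \<circ> swp i j)) = qn A (insert (i, f j) (insert (j, f i) R0))"
    unfolding R0_def Rel_swap[OF i j ij] ..
  also have "\<dots> \<le> qn A (insert (j, f i) R0)" by (rule qn_insert_le[OF fin i fj])
  also have "\<dots> \<le> qn A R0" by (rule qn_insert_le[OF fin j fi])
  finally show "qn A (Rel A (f \<circ> swp i j)) \<le> qn A (Rel A f) + 1" using q0 by simp
  assume nij: "(i, j) \<notin> symc (Rel A f)"
  have nji: "(j, i) \<notin> symc (Rel A f)" using nij symc_sym[of j i] by blast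
  have Dc: "z = i \<or> z = j" if "(z, f z) \<in> {(i, f i), (j, f j)}" for z using that by auto
  have ci: "(f i, i) \<in> symc R0" unfolding R0_def
    by (rule cycle_edge[OF fin bij i]) (use nij in auto)
  have cj: "(f j, j) \<in> symc R0" unfolding R0_def
    by (rule cycle_edge[OF fin bij j]) (use nji in auto)
  have s0: "symc R0 = symc (Rel A f)"
  proof (rule symc_eqI)
    show "R0 \<subseteq> symc (Rel A f)" unfolding R0_def using symc_subI[of "Rel A f"] by blast
    show "Rel A f \<subseteq> symc R0"
    proof
      fix p assume p: "p \<in> Rel A f"
      show "p \<in> symc R0"
      proof (cases "p = (i, f i)")
        case True then show ?thesis using symc_sym[OF ci] by simp
      next
        case F1: False
        show ?thesis
        proof (cases "p = (j, f j)")
          case True then show ?thesis using symc_sym[OF cj] by simp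
        next
          case False then have "p \<in> R0" using p F1 unfolding R0_def by simp
          then show ?thesis using symc_subI[of R0] by blast
        qed
      qed
    qed
  qed
  have "(i, f j) \<notin> symc R0"
  proof
    assume "(i, f j) \<in> symc R0"
    then have "(i, j) \<in> symc R0" using symc_trans[OF _ cj] by blast
    then show False using nij s0 by simp
  qed
  then have "qn A (insert (i, f j) R0) + 1 = qn A R0" by (rule qn_insert_new[OF fin i fj])
  moreover have "qn A R0 = qn A (Rel A f)" by (simp add: qn_def s0)
  moreover have "qn A (Rel A (f \<circ> swp i j)) \<le> qn A (insert (i, f j) R0)"
  proof -
    have "Rel A (f \<circ> swp i j) = insert (j, f i) (insert (i, f j) R0)"
      unfolding R0_def Rel_swap[OF i j ij] by blast
    then show ?thesis using qn_insert_le[OF fin j fi] by simp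
  qed
  ultimately show "qn A (Rel A (f \<circ> swp i j)) + 1 \<le> qn A (Rel A f)" by simp
qed

lemma Rel_cong: "(\<And>x. x \<in> A \<Longrightarrow> f x = g x) \<Longrightarrow> Rel A f = Rel A g"
  by (auto simp: Rel_def)

lemma symc_loops: assumes "R \<subseteq> Id" shows "symc R = Id"
proof -
  have "R \<union> R\<inverse> \<subseteq> Id" using assms by auto
  then have "(R \<union> R\<inverse>)\<^sup>* \<subseteq> Id\<^sup>*" by (rule rtrancl_mono)
  then show ?thesis by (auto simp: symc_def)
qed

lemma qn_Id: "finite A \<Longrightarrow> qn A R = card A" if "symc R = Id"
proof -
  have c: "cls R x = {x}" for x using that by (auto simp: cls_def)
  have "qn A R = card ((\<lambda>x. {x}) ` A)" unfolding qn_def quotient_cls c ..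
  also have "\<dots> = card A" by (rule card_image) (auto simp: inj_on_def)
  finally show ?thesis .
qed

lemma invol_bij: assumes "\<forall>y\<in>H. g y \<in> H \<and> g (g y) = y" shows "bij_betw g H H"
  by (rule bij_betw_byWitness[of H g g]) (use assms in auto)

lemma symc_Un_loops: assumes "L \<subseteq> Id" shows "symc (R \<union> L) = symc R"
proof (rule symc_eqI)
  show "R \<union> L \<subseteq> symc R" using assms symc_subI[of R] by (auto simp: symc_def)
  show "R \<subseteq> symc (R \<union> L)" using symc_subI[of "R \<union> L"] by blast
qed

lemma genus_gen:
  assumes fin: "finite H" and bs: "bij_betw s H H" and ai: "\<forall>y\<in>H. a y \<in> H \<and> a (a y) = y"
  shows "qn H (Rel H s) + qn H (Rel H a) + qn H (Rel H (s \<circ> a)) \<le> card H + 2 * qn H (Rel H s \<union> Rel H a)"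
  using ai
proof (induction "card {y\<in>H. a y \<noteq> y}" arbitrary: a rule: less_induct)
  case less
  show ?case
  proof (cases "\<exists>x\<in>H. a x \<noteq> x")
    case False
    then have fx: "\<And>y. y \<in> H \<Longrightarrow> a y = y" by blast
    have "Rel H a \<subseteq> Id" using fx by (auto simp: Rel_def)
    then have qa: "qn H (Rel H a) = card H" using qn_Id[OF symc_loops fin] by blast
    have "Rel H (s \<circ> a) = Rel H s" by (rule Rel_cong) (simp add: fx)
    moreover have "symc (Rel H s \<union> Rel H a) = symc (Rel H s)"
      by (rule symc_Un_loops) fact
    ultimately show ?thesis using qa by (simp add: qn_def)
  next
    case True
    then obtain x where x: "x \<in> H" "a x \<noteq> x" by blast
    have ax: "a x \<in> H" "a (a x) = x" using less.prems x by auto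
    define a' where "a' = (\<lambda>y. if y = x \<or> y = a x then y else a y)"
    have a'i: "\<forall>y\<in>H. a' y \<in> H \<and> a' (a' y) = y"
    proof
      fix y assume y: "y \<in> H"
      have "a (a y) = y" "a y \<in> H" using less.prems y by auto
      show "a' y \<in> H \<and> a' (a' y) = y"
      proof (cases "y = x \<or> y = a x")
        case True
        then have "a' y = y" by (simp add: a'_def)
        then show ?thesis using y by simp
      next
        case False
        then have e: "a' y = a y" by (simp add: a'_def)
        have "a y \<noteq> x" using False \<open>a (a y) = y\<close> by auto
        moreover have "a y \<noteq> a x" using False \<open>a (a y) = y\<close> ax(2) by metis
        ultimately have "a' (a y) = a (a y)" by (simp add: a'_def)
        then show ?thesis using e \<open>a (a y) = y\<close> \<open>a y \<in> H\<close> by simp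
      qed
    qed
    have subs: "{y\<in>H. a' y \<noteq> y} \<subseteq> {y\<in>H. a y \<noteq> y} - {x}" unfolding a'_def by auto
    have "card {y\<in>H. a' y \<noteq> y} < card {y\<in>H. a y \<noteq> y}"
    proof -
      have "card {y\<in>H. a' y \<noteq> y} \<le> card ({y\<in>H. a y \<noteq> y} - {x})"
        by (rule card_mono) (use fin subs in auto)
      also have "\<dots> < card {y\<in>H. a y \<noteq> y}"
        by (rule card_Diff1_less) (use fin x in auto)
      finally show ?thesis .
    qed
    note IH = less.hyps[OF this a'i]
    have bsa': "bij_betw (s \<circ> a') H H" using invol_bij[OF a'i] bs by (rule bij_betw_trans)
    have sa: "Rel H (s \<circ> a) = Rel H ((s \<circ> a') \<circ> swp x (a x))"
      by (rule Rel_cong) (use ax in \<open>auto simp: a'_def swp_def\<close>)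
    have Ra: "symc (Rel H a) = symc (insert (x, a x) (Rel H a'))"
    proof (rule symc_eqI)
      show "Rel H a \<subseteq> symc (insert (x, a x) (Rel H a'))"
      proof
        fix p assume "p \<in> Rel H a"
        then obtain y where y: "y \<in> H" "p = (y, a y)" by (auto simp: Rel_def)
        show "p \<in> symc (insert (x, a x) (Rel H a'))"
        proof (cases "y = x \<or> y = a x")
          case True
          have e: "(x, a x) \<in> symc (insert (x, a x) (Rel H a'))" by (rule symc_base) simp
          show ?thesis using True
          proof
            assume "y = x" then show ?thesis using y e by simp
          next
            assume "y = a x" then show ?thesis using y symc_sym[OF e] ax by simp
          qed
        next
          case False
          then have "p \<in> Rel H a'" using y by (auto simp: Rel_def a'_def)
          then show ?thesis using symc_subI[of "insert (x, a x) (Rel H a')"] by blast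
        qed
      qed
      show "insert (x, a x) (Rel H a') \<subseteq> symc (Rel H a)"
      proof
        fix p assume "p \<in> insert (x, a x) (Rel H a')"
        then consider "p = (x, a x)" | y where "y \<in> H" "p = (y, a' y)" by (auto simp: Rel_def)
        then show "p \<in> symc (Rel H a)"
        proof cases
          case 1 then show ?thesis using x by (simp add: symc_base Rel_iff)
        next
          case (2 y) show ?thesis
          proof (cases "y = x \<or> y = a x")
            case True then have "a' y = y" by (simp add: a'_def)
            then show ?thesis using 2 by simp
          next
            case False then have "a' y = a y" by (simp add: a'_def)
            then have "p \<in> Rel H a" using 2 by (simp add: Rel_iff)
            then show ?thesis using symc_subI[of "Rel H a"] by blast
          qed
        qed
      qed
    qed
    have xonly: "(x, z) \<in> symc (Rel H a') \<Longrightarrow> z = x" for z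
    proof -
      assume "(x, z) \<in> symc (Rel H a')"
      then have "(x, z) \<in> (Rel H a' \<union> (Rel H a')\<inverse>)\<^sup>*" by (simp add: symc_def)
      then show "z = x"
      proof (induction rule: rtrancl_induct)
        case base then show ?case by simp
      next
        case (step y z)
        from step(2) have "(y, z) \<in> Rel H a' \<or> (z, y) \<in> Rel H a'" by blast
        then have "(x, z) \<in> Rel H a' \<or> (z, x) \<in> Rel H a'" using step(3) by simp
        then show ?case
        proof
          assume "(x, z) \<in> Rel H a'"
          then have "z = a' x" by (simp add: Rel_iff)
          then show ?thesis by (simp add: a'_def)
        next
          assume h: "(z, x) \<in> Rel H a'"
          then have zH: "z \<in> H" and xz: "x = a' z" by (simp_all add: Rel_iff)
          show ?thesis
          proof (cases "z = x \<or> z = a x")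
            case True
            then have "a' z = z" by (simp add: a'_def)
            then show ?thesis using xz by simp
          next
            case False
            then have "a' z = a z" by (simp add: a'_def)
            then have "a z = x" using xz by simp
            moreover have "a (a z) = z" using less.prems zH by blast
            ultimately have "z = a x" by simp
            then show ?thesis using False by simp
          qed
        qed
      qed
    qed
    have nx: "(x, a x) \<notin> symc (Rel H a')" using xonly x(2) by blast
    have qa: "qn H (Rel H a') = qn H (Rel H a) + 1"
      using qn_insert_new[OF fin x(1) ax(1) nx] Ra by (simp add: qn_def)
    have Rsa: "symc (Rel H s \<union> Rel H a) = symc (insert (x, a x) (Rel H s \<union> Rel H a'))"
    proof (rule symc_eqI)
      show "Rel H s \<union> Rel H a \<subseteq> symc (insert (x, a x) (Rel H s \<union> Rel H a'))"
      proof
        fix p assume p: "p \<in> Rel H s \<union> Rel H a"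
        show "p \<in> symc (insert (x, a x) (Rel H s \<union> Rel H a'))"
        proof (cases "p \<in> Rel H s")
          case True then show ?thesis using symc_subI[of "insert (x, a x) (Rel H s \<union> Rel H a')"] by blast
        next
          case False
          then have "p \<in> Rel H a" using p by simp
          then obtain y where y: "y \<in> H" "p = (y, a y)" by (auto simp: Rel_def)
          have e: "(x, a x) \<in> symc (insert (x, a x) (Rel H s \<union> Rel H a'))" by (rule symc_base) simp
          show ?thesis
          proof (cases "y = x \<or> y = a x")
            case True
            then show ?thesis
            proof
              assume "y = x" then show ?thesis using y e by simp
            next
              assume "y = a x" then show ?thesis using y symc_sym[OF e] ax by simp
            qed
          next
            case False
            then have "p \<in> Rel H a'" using y by (auto simp: Rel_def a'_def)
            then show ?thesis using symc_subI[of "insert (x, a x) (Rel H s \<union> Rel H a')"] by blast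
          qed
        qed
      qed
      show "insert (x, a x) (Rel H s \<union> Rel H a') \<subseteq> symc (Rel H s \<union> Rel H a)"
      proof
        fix p assume "p \<in> insert (x, a x) (Rel H s \<union> Rel H a')"
        then consider "p = (x, a x)" | "p \<in> Rel H s" | y where "y \<in> H" "p = (y, a' y)" by (auto simp: Rel_def)
        then show "p \<in> symc (Rel H s \<union> Rel H a)"
        proof cases
          case 1 then show ?thesis using x by (simp add: symc_base Rel_iff)
        next
          case 2 then show ?thesis using symc_subI[of "Rel H s \<union> Rel H a"] by blast
        next
          case (3 y) show ?thesis
          proof (cases "y = x \<or> y = a x")
            case True then have "a' y = y" by (simp add: a'_def)
            then show ?thesis using 3 by simp
          next
            case False then have "a' y = a y" by (simp add: a'_def)
            then have "p \<in> Rel H s \<union> Rel H a" using 3 by (simp add: Rel_iff)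
            then show ?thesis using symc_subI[of "Rel H s \<union> Rel H a"] by blast
          qed
        qed
      qed
    qed
    have sub_sa': "symc (Rel H (s \<circ> a')) \<subseteq> symc (Rel H s \<union> Rel H a')"
    proof (rule symc_sub, rule subsetI)
      fix p assume "p \<in> Rel H (s \<circ> a')"
      then obtain y where y: "y \<in> H" "p = (y, s (a' y))" by (auto simp: Rel_def)
      have a'y: "a' y \<in> H" using a'i y by blast
      have 1: "(y, a' y) \<in> symc (Rel H s \<union> Rel H a')" using y by (simp add: symc_base Rel_iff)
      have 2: "(a' y, s (a' y)) \<in> symc (Rel H s \<union> Rel H a')" using a'y by (simp add: symc_base Rel_iff)
      show "p \<in> symc (Rel H s \<union> Rel H a')" using symc_trans[OF 1 2] y by simp
    qed
    have sxH: "a x \<in> H" by (rule ax(1))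
    have xne: "x \<noteq> a x" using x(2) by simp
    note P1 = perm_swap_qn[OF fin bsa' x(1) sxH xne]
    show ?thesis
    proof (cases "(x, a x) \<in> symc (Rel H s \<union> Rel H a')")
      case True
      then have "qn H (Rel H s \<union> Rel H a) = qn H (Rel H s \<union> Rel H a')"
        using Rsa qn_insert_old[OF True] by (simp add: qn_def)
      moreover have "qn H (Rel H (s \<circ> a)) \<le> qn H (Rel H (s \<circ> a')) + 1"
        using P1(1) sa by simp
      ultimately show ?thesis using IH qa by simp
    next
      case False
      have "qn H (insert (x, a x) (Rel H s \<union> Rel H a')) + 1 = qn H (Rel H s \<union> Rel H a')"
        by (rule qn_insert_new[OF fin x(1) sxH False])
      then have c: "qn H (Rel H s \<union> Rel H a) + 1 = qn H (Rel H s \<union> Rel H a')"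
        using Rsa by (simp add: qn_def)
      have "(x, a x) \<notin> symc (Rel H (s \<circ> a'))" using False sub_sa' by blast
      then have "qn H (Rel H (s \<circ> a)) + 1 \<le> qn H (Rel H (s \<circ> a'))"
        using P1(2) sa by simp
      then show ?thesis using IH qa c by simp
    qed
  qed
qed

lemma orbit_cls:
  assumes fin: "finite H" and bij: "bij_betw f H H" and y: "y \<in> H"
  shows "{(f ^^ n) y | n. True} = cls (Rel H f) y"
proof (rule set_eqI, rule iffI)
  have im: "f ` H \<subseteq> H" using bij by (simp add: bij_betw_def)
  fix z assume "z \<in> {(f ^^ n) y | n. True}"
  then obtain n where "z = (f ^^ n) y" by blast
  then show "z \<in> cls (Rel H f) y" using rtrancl_symc[OF funpow_rtrancl[OF im y]] by (simp add: in_cls)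
next
  have im: "f ` H \<subseteq> H" using bij by (simp add: bij_betw_def)
  have inj: "inj_on f H" using bij by (simp add: bij_betw_def)
  fix z assume "z \<in> cls (Rel H f) y"
  then have "(y, z) \<in> (Rel H f \<union> (Rel H f)\<inverse>)\<^sup>*" by (simp add: in_cls symc_def)
  then show "z \<in> {(f ^^ n) y | n. True}"
  proof (induction rule: rtrancl_induct)
    case base then show ?case by (auto intro: exI[of _ 0])
  next
    case (step w z)
    from step(3) obtain n where n: "w = (f ^^ n) y" by blast
    from step(2) have "(w, z) \<in> Rel H f \<or> (z, w) \<in> Rel H f" by blast
    then show ?case
    proof
      assume "(w, z) \<in> Rel H f"
      then have "z = (f ^^ Suc n) y" using n by (simp add: Rel_iff)
      then show ?thesis by blast
    next
      assume "(z, w) \<in> Rel H f"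
      then have zH: "z \<in> H" and fz: "f z = w" by (simp_all add: Rel_iff)
      show ?thesis
      proof (cases n)
        case (Suc m)
        have "f z = f ((f ^^ m) y)" using fz n Suc by simp
        moreover have "(f ^^ m) y \<in> H" by (rule funpow_in[OF im y])
        ultimately have "z = (f ^^ m) y" using inj zH by (simp add: inj_on_eq_iff)
        then show ?thesis by blast
      next
        case 0
        obtain k where k: "0 < k" "(f ^^ k) y = y" using period_exists[OF fin bij y] by blast
        then obtain m where m: "k = Suc m" using gr0_implies_Suc by blast
        have "f z = f ((f ^^ m) y)" using fz n 0 k m by simp
        moreover have "(f ^^ m) y \<in> H" by (rule funpow_in[OF im y])
        ultimately have "z = (f ^^ m) y" using inj zH by (simp add: inj_on_eq_iff)
        then show ?thesis by blast
      qed
    qed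
  qed
qed

lemma perm_orbits_cls:
  assumes fin: "finite H" and bij: "bij_betw f H H"
  shows "perm_orbits H f = H // symc (Rel H f)"
proof -
  have "perm_orbits H f = (\<lambda>y. {(f ^^ n) y | n. True}) ` H" by (auto simp: perm_orbits_def)
  also have "\<dots> = cls (Rel H f) ` H" using orbit_cls[OF fin bij] by (rule image_cong[OF refl])
  finally show ?thesis by (simp add: quotient_cls)
qed

lemma card_perm_orbits:
  assumes fin: "finite H" and bij: "bij_betw f H H"
  shows "card (perm_orbits H f) = qn H (Rel H f)"
  using perm_orbits_cls[OF assms] by (simp add: qn_def)

lemma map_components_cls:
  "map_components H a s = H // symc (Rel H s \<union> Rel H a)"
proof -
  have "{(d, a d) | d. d \<in> H} \<union> {(a d, d) | d. d \<in> H} \<union> {(d, s d) | d. d \<in> H} \<union> {(s d, d) | d. d \<in> H}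
        = (Rel H s \<union> Rel H a) \<union> (Rel H s \<union> Rel H a)\<inverse>"
    by (auto simp: Rel_def)
  then show ?thesis by (simp add: map_components_def symc_def)
qed

lemma invol_funpow: "a (a y) = y \<Longrightarrow> (a ^^ n) y = (if even n then y else a y)"
  by (induction n) auto

lemma fpf_qn:
  assumes fin: "finite H" and ai: "\<forall>y\<in>H. a y \<in> H \<and> a (a y) = y \<and> a y \<noteq> y"
  shows "2 * qn H (Rel H a) = card H"
proof -
  have bij: "bij_betw a H H" by (rule invol_bij) (use ai in blast)
  have c: "cls (Rel H a) y = {y, a y}" if y: "y \<in> H" for y
  proof -
    have "cls (Rel H a) y = {(a ^^ n) y | n. True}" using orbit_cls[OF fin bij y] by simp
    also have "\<dots> = {y, a y}"
    proof -
      have aa: "a (a y) = y" using ai y by blast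
      have "{(a ^^ n) y | n. True} = {(if even n then y else a y) | n::nat. True}"
        using invol_funpow[of a y, OF aa] by simp
      also have "\<dots> = {y, a y}"
      proof (rule set_eqI, rule iffI)
        fix z assume "z \<in> {(if even n then y else a y) | n::nat. True}"
        then show "z \<in> {y, a y}" by (auto split: if_splits)
      next
        fix z assume "z \<in> {y, a y}"
        then consider "z = y" | "z = a y" by blast
        then show "z \<in> {(if even n then y else a y) | n::nat. True}"
        proof cases
          case 1 then show ?thesis by (intro CollectI exI[of _ "0::nat"]) simp
        next
          case 2 then show ?thesis by (intro CollectI exI[of _ "1::nat"]) simp
        qed
      qed
      finally show ?thesis .
    qed
    finally show ?thesis .
  qed
  define C where "C = H // symc (Rel H a)"
  have C: "C = (\<lambda>y. {y, a y}) ` H" unfolding C_def quotient_cls using c by (rule image_cong[OF refl])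
  have "2 * card C = card (\<Union>C)"
  proof (rule card_partition)
    show "finite C" unfolding C using fin by simp
    show "finite (\<Union>C)" unfolding C using fin ai by auto
    show "\<And>c. c \<in> C \<Longrightarrow> card c = 2" unfolding C using ai by auto
    show "\<And>c1 c2. c1 \<in> C \<Longrightarrow> c2 \<in> C \<Longrightarrow> c1 \<noteq> c2 \<Longrightarrow> c1 \<inter> c2 = {}"
    proof -
      fix c1 c2 assume "c1 \<in> C" "c2 \<in> C" "c1 \<noteq> c2"
      then obtain y z where yz: "y \<in> H" "z \<in> H" "c1 = {y, a y}" "c2 = {z, a z}" "c1 \<noteq> c2" unfolding C by blast
      have ay: "a (a y) = y" and az: "a (a z) = z" using ai yz by auto
      show "c1 \<inter> c2 = {}"
      proof (rule ccontr)
        assume "c1 \<inter> c2 \<noteq> {}"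
        then have "y = z \<or> y = a z \<or> a y = z \<or> a y = a z" using yz by auto
        then have "{y, a y} = {z, a z}"
        proof (elim disjE)
          assume "y = z" then show ?thesis by simp
        next
          assume "y = a z" then show ?thesis using az by auto
        next
          assume "a y = z" then show ?thesis using ay by auto
        next
          assume "a y = a z" then have "a (a y) = a (a z)" by simp
          then have "y = z" using ay az by simp
          then show ?thesis by simp
        qed
        then have "c1 = c2" using yz by simp
        then show False using yz by simp
      qed
    qed
  qed
  moreover have "\<Union>C = H" unfolding C using ai by auto
  ultimately show ?thesis unfolding qn_def C_def by simp
qed

definition liftp :: "('d \<Rightarrow> 'd) \<Rightarrow> ('d \<Rightarrow> bool) \<Rightarrow> 'd \<times> bool \<Rightarrow> 'd \<times> bool" where
  "liftp f t p = (f (fst p), snd p \<noteq> t (fst p))"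

lemma liftp_simp[simp]: "liftp f t (y, s) = (f y, s \<noteq> t y)"
  by (simp add: liftp_def)

lemma liftp_bij:
  assumes bij: "bij_betw f H H"
  shows "bij_betw (liftp f t) (H \<times> UNIV) (H \<times> UNIV)"
proof -
  have inj: "inj_on f H" and im: "f ` H = H" using bij by (auto simp: bij_betw_def)
  have "inj_on (liftp f t) (H \<times> UNIV)"
  proof (rule inj_onI)
    fix p q assume p: "p \<in> H \<times> UNIV" and q: "q \<in> H \<times> UNIV" and e: "liftp f t p = liftp f t q"
    obtain y s where ps: "p = (y, s)" by (cases p)
    obtain z u where qs: "q = (z, u)" by (cases q)
    have "f y = f z" using e ps qs by simp
    then have yz: "y = z" using inj p q ps qs by (simp add: inj_on_eq_iff)
    then have "s = u" using e ps qs by auto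
    then show "p = q" using ps qs yz by simp
  qed
  moreover have "liftp f t ` (H \<times> UNIV) = H \<times> UNIV"
  proof (rule set_eqI, rule iffI)
    fix p assume "p \<in> liftp f t ` (H \<times> UNIV)"
    then obtain y s where "y \<in> H" "p = (f y, s \<noteq> t y)" by auto
    then show "p \<in> H \<times> UNIV" using im by auto
  next
    fix p :: "'a \<times> bool" assume p: "p \<in> H \<times> UNIV"
    obtain z c where pc: "p = (z, c)" by (cases p)
    have "z \<in> f ` H" using p pc im by simp
    then obtain y where y: "y \<in> H" "z = f y" by blast
    have "liftp f t (y, c \<noteq> t y) = p" using pc y by auto
    then show "p \<in> liftp f t ` (H \<times> UNIV)" using y by force
  qed
  ultimately show ?thesis by (simp add: bij_betw_def)
qed

lemma liftp_funpow:
  assumes im: "f ` H \<subseteq> H" and pot: "\<forall>y\<in>H. h (f y) = (h y \<noteq> t y)" and y: "y \<in> H"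
  shows "(liftp f t ^^ n) (y, s) = ((f ^^ n) y, (s \<noteq> h y) \<noteq> h ((f ^^ n) y))"
proof (induction n)
  case 0 then show ?case by auto
next
  case (Suc n)
  have w: "(f ^^ n) y \<in> H" by (rule funpow_in[OF im y])
  have hw: "h (f ((f ^^ n) y)) = (h ((f ^^ n) y) \<noteq> t ((f ^^ n) y))" using pot w by blast
  show ?case using Suc hw by auto
qed

lemma lift_qn:
  assumes fin: "finite H" and bij: "bij_betw f H H" and pot: "\<forall>y\<in>H. h (f y) = (h y \<noteq> t y)"
  shows "qn (H \<times> UNIV) (Rel (H \<times> UNIV) (liftp f t)) = 2 * qn H (Rel H f)"
proof -
  have im: "f ` H \<subseteq> H" using bij by (simp add: bij_betw_def)
  define L where "L = (\<lambda>C c. (\<lambda>z. (z, c \<noteq> h z)) ` C)"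
  have finH: "finite (H \<times> (UNIV :: bool set))" using fin by simp
  note bijl = liftp_bij[OF bij, of t]
  have clsl: "cls (Rel (H \<times> UNIV) (liftp f t)) (y, s) = L (cls (Rel H f) y) (s \<noteq> h y)" if y: "y \<in> H" for y s
  proof -
    have "cls (Rel (H \<times> UNIV) (liftp f t)) (y, s) = {(liftp f t ^^ n) (y, s) | n. True}"
      using orbit_cls[OF finH bijl, of "(y, s)"] y by simp
    also have "\<dots> = {((f ^^ n) y, (s \<noteq> h y) \<noteq> h ((f ^^ n) y)) | n. True}"
      using liftp_funpow[OF im pot y] by simp
    also have "\<dots> = L {(f ^^ n) y | n. True} (s \<noteq> h y)" unfolding L_def by blast
    also have "\<dots> = L (cls (Rel H f) y) (s \<noteq> h y)" using orbit_cls[OF fin bij y] by simp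
    finally show ?thesis .
  qed
  have img: "(H \<times> UNIV) // symc (Rel (H \<times> UNIV) (liftp f t))
             = (\<lambda>q. L (fst q) (snd q)) ` ((H // symc (Rel H f)) \<times> UNIV)"
  proof (rule set_eqI, rule iffI)
    fix X assume "X \<in> (H \<times> UNIV) // symc (Rel (H \<times> UNIV) (liftp f t))"
    then obtain y s where ys: "y \<in> H" "X = cls (Rel (H \<times> UNIV) (liftp f t)) (y, s)"
      unfolding quotient_cls by auto
    then have "X = L (cls (Rel H f) y) (s \<noteq> h y)" using clsl by simp
    moreover have "cls (Rel H f) y \<in> H // symc (Rel H f)" using ys unfolding quotient_cls by simp
    ultimately show "X \<in> (\<lambda>q. L (fst q) (snd q)) ` ((H // symc (Rel H f)) \<times> UNIV)" by force
  next
    fix X assume "X \<in> (\<lambda>q. L (fst q) (snd q)) ` ((H // symc (Rel H f)) \<times> UNIV)"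
    then obtain y c where yc: "y \<in> H" "X = L (cls (Rel H f) y) c" unfolding quotient_cls by auto
    have "cls (Rel (H \<times> UNIV) (liftp f t)) (y, c \<noteq> h y) = X" proof -
      have "((c \<noteq> h y) \<noteq> h y) = c" by auto
      then show ?thesis using clsl[OF yc(1), of "c \<noteq> h y"] yc by simp
    qed
    then show "X \<in> (H \<times> UNIV) // symc (Rel (H \<times> UNIV) (liftp f t))"
      unfolding quotient_cls using yc(1) by force
  qed
  have inj: "inj_on (\<lambda>q. L (fst q) (snd q)) ((H // symc (Rel H f)) \<times> UNIV)"
  proof (rule inj_onI)
    fix p q assume p: "p \<in> (H // symc (Rel H f)) \<times> UNIV" and q: "q \<in> (H // symc (Rel H f)) \<times> UNIV"
      and e: "L (fst p) (snd p) = L (fst q) (snd q)"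
    obtain y where y: "y \<in> H" "fst p = cls (Rel H f) y" using p unfolding quotient_cls by auto
    obtain z where z: "z \<in> H" "fst q = cls (Rel H f) z" using q unfolding quotient_cls by auto
    have fstL: "fst ` L C c = C" for C c unfolding L_def by force
    have 1: "fst p = fst q" using fstL[of "fst p" "snd p"] fstL[of "fst q" "snd q"] e by simp
    have yin: "y \<in> fst p" using y by (simp add: in_cls)
    then have "(y, snd p \<noteq> h y) \<in> L (fst q) (snd q)" using e unfolding L_def by blast
    then have "snd p = snd q" unfolding L_def by auto
    then show "p = q" using 1 by (simp add: prod_eq_iff)
  qed
  have "qn (H \<times> UNIV) (Rel (H \<times> UNIV) (liftp f t)) = card ((H // symc (Rel H f)) \<times> (UNIV :: bool set))"
    unfolding qn_def img using card_image[OF inj] .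
  also have "\<dots> = 2 * qn H (Rel H f)" by (simp add: qn_def card_cartesian_product)
  finally show ?thesis .
qed

lemma symc_closed:
  assumes R: "R \<subseteq> H \<times> H" and xy: "(x, y) \<in> symc R" and x: "x \<in> H"
  shows "y \<in> H"
proof -
  from xy have "(x, y) \<in> (R \<union> R\<inverse>)\<^sup>*" by (simp add: symc_def)
  then show ?thesis
  proof (induction rule: rtrancl_induct)
    case base then show ?case using x .
  next
    case (step y z)
    then show ?case using R by blast
  qed
qed

lemma symc_image:
  assumes "\<And>p q. (p, q) \<in> R \<Longrightarrow> (g p, g q) \<in> symc R'"
    and "(p, q) \<in> symc R"
  shows "(g p, g q) \<in> symc R'"
proof -
  from assms(2) have "(p, q) \<in> (R \<union> R\<inverse>)\<^sup>*" by (simp add: symc_def)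
  then show ?thesis
  proof (induction rule: rtrancl_induct)
    case base then show ?case by simp
  next
    case (step q r)
    from step(2) have "(q, r) \<in> R \<or> (r, q) \<in> R" by blast
    then have "(g q, g r) \<in> symc R'"
    proof
      assume "(q, r) \<in> R" then show ?thesis by (rule assms(1))
    next
      assume "(r, q) \<in> R" then have "(g r, g q) \<in> symc R'" by (rule assms(1))
      then show ?thesis by (rule symc_sym)
    qed
    with step(3) show ?case by (rule symc_trans)
  qed
qed

lemma cover_potential:
  fixes s a :: "'d \<Rightarrow> 'd" and f h :: "'d \<Rightarrow> bool"
  assumes fin: "finite H" and bs: "bij_betw s H H"
    and ai: "\<forall>y\<in>H. a y \<in> H \<and> a (a y) = y \<and> a y \<noteq> y"
    and fa: "\<forall>y\<in>H. f (a y) = f y"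
    and pot: "\<forall>y\<in>H. h (s y) = (h y \<noteq> f y)"
    and planar: "2 * qn H (Rel H s) + 2 * qn H (Rel H (s \<circ> a)) = card H + 4 * qn H (Rel H s \<union> Rel H a)"
  shows "\<exists>g. \<forall>y\<in>H. g (s y) = (g y \<noteq> f y) \<and> g (a y) = (g y \<noteq> f y)"
proof -
  define HH where "HH = H \<times> (UNIV :: bool set)"
  define ss where "ss = liftp s f"
  define aa where "aa = liftp a f"
  have finHH: "finite HH" unfolding HH_def using fin by simp
  have cardHH: "card HH = 2 * card H" unfolding HH_def by (simp add: card_cartesian_product)
  have sim: "s ` H \<subseteq> H" using bs by (simp add: bij_betw_def)
  have bss: "bij_betw ss HH HH" unfolding ss_def HH_def by (rule liftp_bij[OF bs])
  have aai: "\<forall>p\<in>HH. aa p \<in> HH \<and> aa (aa p) = p \<and> aa p \<noteq> p"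
  proof
    fix p assume p: "p \<in> HH"
    obtain y c where yc: "p = (y, c)" by (cases p)
    have y: "y \<in> H" using p yc HH_def by simp
    have "a y \<in> H" "a (a y) = y" "a y \<noteq> y" "f (a y) = f y" using ai fa y by auto
    then show "aa p \<in> HH \<and> aa (aa p) = p \<and> aa p \<noteq> p" unfolding aa_def HH_def yc by auto
  qed
  have bsa: "bij_betw (s \<circ> a) H H" using invol_bij[of H a] ai bs by (meson bij_betw_trans)
  have sa_eq: "Rel HH (ss \<circ> aa) = Rel HH (liftp (s \<circ> a) (\<lambda>_. False))"
  proof (rule Rel_cong)
    fix p assume p: "p \<in> HH"
    obtain y c where yc: "p = (y, c)" by (cases p)
    have y: "y \<in> H" using p yc HH_def by simp
    have "f (a y) = f y" using fa y by auto
    then show "(ss \<circ> aa) p = liftp (s \<circ> a) (\<lambda>_. False) p" unfolding ss_def aa_def yc by auto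
  qed
  have q1: "qn HH (Rel HH ss) = 2 * qn H (Rel H s)"
    unfolding HH_def ss_def by (rule lift_qn[OF fin bs pot])
  have q2: "qn HH (Rel HH (ss \<circ> aa)) = 2 * qn H (Rel H (s \<circ> a))"
    unfolding sa_eq unfolding HH_def by (rule lift_qn[OF fin bsa, of "\<lambda>_. False"]) simp
  have q3: "2 * qn HH (Rel HH aa) = card HH" by (rule fpf_qn[OF finHH aai])
  have gen: "qn HH (Rel HH ss) + qn HH (Rel HH aa) + qn HH (Rel HH (ss \<circ> aa)) \<le> card HH + 2 * qn HH (Rel HH ss \<union> Rel HH aa)"
    by (rule genus_gen[OF finHH bss]) (use aai in blast)
  define E where "E = symc (Rel H s \<union> Rel H a)"
  define EE where "EE = symc (Rel HH ss \<union> Rel HH aa)"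
  have CC: "2 * qn H (Rel H s \<union> Rel H a) \<le> qn HH (Rel HH ss \<union> Rel HH aa)"
    using gen q1 q2 q3 planar cardHH by simp
  have RH: "Rel H s \<union> Rel H a \<subseteq> H \<times> H" using sim ai by (auto simp: Rel_def)
  have lift: "\<exists>t'. ((y, t), (y', t')) \<in> EE" if "(y, y') \<in> E" "y \<in> H" for y y' t
  proof -
    from that(1) have "(y, y') \<in> (Rel H s \<union> Rel H a \<union> (Rel H s \<union> Rel H a)\<inverse>)\<^sup>*" by (simp add: E_def symc_def)
    then show ?thesis
    proof (induction rule: rtrancl_induct)
      case base then show ?case by (intro exI[of _ t]) (simp add: EE_def)
    next
      case (step w z)
      from step(3) obtain tw where tw: "((y, t), (w, tw)) \<in> EE" by blast
      from step(2) consider "w \<in> H" "z = s w" | "w \<in> H" "z = a w" | "z \<in> H" "w = s z" | "z \<in> H" "w = a z"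
        by (auto simp: Rel_def)
      then show ?case
      proof cases
        case 1
        have "((w, tw), (z, tw \<noteq> f w)) \<in> Rel HH ss" using 1 by (simp add: Rel_iff HH_def ss_def)
        then have "((w, tw), (z, tw \<noteq> f w)) \<in> EE" unfolding EE_def by (intro symc_base) simp
        then show ?thesis using symc_trans[OF tw[unfolded EE_def]] unfolding EE_def by blast
      next
        case 2
        have "((w, tw), (z, tw \<noteq> f w)) \<in> Rel HH aa" using 2 by (simp add: Rel_iff HH_def aa_def)
        then have "((w, tw), (z, tw \<noteq> f w)) \<in> EE" unfolding EE_def by (intro symc_base) simp
        then show ?thesis using symc_trans[OF tw[unfolded EE_def]] unfolding EE_def by blast
      next
        case 3
        have e: "(tw \<noteq> f z) \<noteq> f z = tw" by auto
        have "((z, tw \<noteq> f z), (w, tw)) \<in> Rel HH ss" using 3 e by (simp add: Rel_iff HH_def ss_def)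
        then have "((w, tw), (z, tw \<noteq> f z)) \<in> EE" unfolding EE_def by (intro symc_base') simp
        then show ?thesis using symc_trans[OF tw[unfolded EE_def]] unfolding EE_def by blast
      next
        case 4
        have e: "(tw \<noteq> f z) \<noteq> f z = tw" by auto
        have "((z, tw \<noteq> f z), (w, tw)) \<in> Rel HH aa" using 4 e by (simp add: Rel_iff HH_def aa_def)
        then have "((w, tw), (z, tw \<noteq> f z)) \<in> EE" unfolding EE_def by (intro symc_base') simp
        then show ?thesis using symc_trans[OF tw[unfolded EE_def]] unfolding EE_def by blast
      qed
    qed
  qed
  define fl where "fl = (\<lambda>p::'d \<times> bool. (fst p, \<not> snd p))"
  have flip: "(fl p, fl q) \<in> EE" if "(p, q) \<in> EE" for p q
    unfolding EE_def
  proof (rule symc_image[of _ fl])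
    fix p q assume "(p, q) \<in> Rel HH ss \<union> Rel HH aa"
    then have "(fl p, fl q) \<in> Rel HH ss \<union> Rel HH aa"
      unfolding Rel_def HH_def ss_def aa_def fl_def liftp_def by auto
    then show "(fl p, fl q) \<in> symc (Rel HH ss \<union> Rel HH aa)" by (rule symc_base)
  next
    show "(p, q) \<in> symc (Rel HH ss \<union> Rel HH aa)" using that unfolding EE_def .
  qed
  define rep where "rep = (\<lambda>K::'d set. SOME z. z \<in> K)"
  have rep_in: "rep (cls (Rel H s \<union> Rel H a) y) \<in> cls (Rel H s \<union> Rel H a) y" for y
  proof -
    have "y \<in> cls (Rel H s \<union> Rel H a) y" by (simp add: in_cls)
    then show ?thesis unfolding rep_def by (rule someI)
  qed
  define r where "r = (\<lambda>y. rep (cls (Rel H s \<union> Rel H a) y))"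
  have r_E: "(y, r y) \<in> E" for y using rep_in[of y] unfolding r_def E_def by (simp add: in_cls)
  have r_H: "y \<in> H \<Longrightarrow> r y \<in> H" for y using symc_closed[OF RH r_E[unfolded E_def]] by blast
  have r_eq: "(y, z) \<in> E \<Longrightarrow> r y = r z" for y z
    unfolding r_def E_def using cls_eq_iff by metis
  define Phi where "Phi = (\<lambda>q. cls (Rel HH ss \<union> Rel HH aa) (rep (fst q), snd q))"
  define DD where "DD = (H // E) \<times> (UNIV :: bool set)"
  have finDD: "finite DD" unfolding DD_def E_def quotient_cls using fin by simp
  have cardDD: "card DD = 2 * qn H (Rel H s \<union> Rel H a)"
    unfolding DD_def qn_def E_def by (simp add: card_cartesian_product)
  have surj: "HH // EE \<subseteq> Phi ` DD"
  proof
    fix X assume "X \<in> HH // EE"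
    then obtain y t where yt: "y \<in> H" "X = cls (Rel HH ss \<union> Rel HH aa) (y, t)"
      unfolding EE_def quotient_cls HH_def by auto
    obtain t' where t': "((y, t), (r y, t')) \<in> EE" using lift[OF r_E yt(1)] by blast
    have "X = Phi (cls (Rel H s \<union> Rel H a) y, t')"
      unfolding Phi_def yt(2) using t' unfolding EE_def r_def by (simp add: cls_eq_iff)
    moreover have "(cls (Rel H s \<union> Rel H a) y, t') \<in> DD" unfolding DD_def E_def quotient_cls using yt(1) by simp
    ultimately show "X \<in> Phi ` DD" by blast
  qed
  have noflip: "((y, t), (y, \<not> t)) \<notin> EE" if y: "y \<in> H" for y t
  proof
    assume yy: "((y, t), (y, \<not> t)) \<in> EE"
    have ry: "(r y, y) \<in> E" using r_E[of y] unfolding E_def by (rule symc_sym)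
    obtain t1 where t1: "((r y, False), (y, t1)) \<in> EE" using lift[OF ry r_H[OF y]] by blast
    have t1f: "((r y, True), (y, \<not> t1)) \<in> EE" using flip[OF t1] unfolding fl_def by simp
    have yy': "((y, t1), (y, \<not> t1)) \<in> EE"
    proof (cases "t1 = t")
      case True then show ?thesis using yy by simp
    next
      case False
      then have "t1 = (\<not> t)" by simp
      then show ?thesis using symc_sym[OF yy[unfolded EE_def]] unfolding EE_def by simp
    qed
    have "((r y, False), (r y, True)) \<in> EE"
      using symc_trans[OF symc_trans[OF t1[unfolded EE_def] yy'[unfolded EE_def]] symc_sym[OF t1f[unfolded EE_def]]]
      unfolding EE_def .
    then have eqPhi: "Phi (cls (Rel H s \<union> Rel H a) y, False) = Phi (cls (Rel H s \<union> Rel H a) y, True)"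
      unfolding Phi_def r_def[symmetric] using cls_eq_iff by (metis fst_conv snd_conv r_def EE_def)
    have inD: "(cls (Rel H s \<union> Rel H a) y, b) \<in> DD" for b
      unfolding DD_def E_def quotient_cls using y by simp
    have "\<not> inj_on Phi DD"
    proof
      assume "inj_on Phi DD"
      then have "(cls (Rel H s \<union> Rel H a) y, False) = (cls (Rel H s \<union> Rel H a) y, True)"
        using eqPhi inD by (meson inj_onD)
      then show False by simp
    qed
    then have "card (Phi ` DD) < card DD"
      using inj_on_iff_eq_card[OF finDD, of Phi] card_image_le[OF finDD, of Phi] by (simp add: order_less_le)
    moreover have "card (HH // EE) \<le> card (Phi ` DD)"
      using surj finDD by (simp add: card_mono)
    ultimately have "qn HH (Rel HH ss \<union> Rel HH aa) < 2 * qn H (Rel H s \<union> Rel H a)"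
      using cardDD unfolding qn_def EE_def by simp
    then show False using CC by simp
  qed
  define g where "g = (\<lambda>y. ((y, True), (r y, False)) \<in> EE)"
  have gkey: "((y, g y), (r y, False)) \<in> EE" if y: "y \<in> H" for y
  proof -
    have ry: "(r y, y) \<in> E" using r_E[of y] unfolding E_def by (rule symc_sym)
    obtain t0 where "((r y, False), (y, t0)) \<in> EE" using lift[OF ry r_H[OF y]] by blast
    then have t0: "((y, t0), (r y, False)) \<in> EE" unfolding EE_def by (rule symc_sym)
    show ?thesis
    proof (cases t0)
      case True then show ?thesis using t0 unfolding g_def by simp
    next
      case False
      have "\<not> g y"
      proof
        assume "g y"
        then have "((y, True), (r y, False)) \<in> EE" unfolding g_def .
        then have "((y, True), (y, False)) \<in> EE"
          using symc_trans[OF _ symc_sym[OF t0[unfolded EE_def]]] False unfolding EE_def by simp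
        then show False using noflip[OF y, of True] by simp
      qed
      then show ?thesis using t0 False by simp
    qed
  qed
  have guniq: "t = g y" if y: "y \<in> H" and h: "((y, t), (r y, False)) \<in> EE" for y t
  proof (rule ccontr)
    assume ne: "t \<noteq> g y"
    have "((y, t), (y, g y)) \<in> EE"
      using symc_trans[OF h[unfolded EE_def] symc_sym[OF gkey[OF y, unfolded EE_def]]] unfolding EE_def .
    moreover have "g y = (\<not> t)" using ne by simp
    ultimately show False using noflip[OF y, of t] by simp
  qed
  have "\<forall>y\<in>H. g (s y) = (g y \<noteq> f y) \<and> g (a y) = (g y \<noteq> f y)"
  proof
    fix y assume y: "y \<in> H"
    have sy: "s y \<in> H" using sim y by blast
    have ay: "a y \<in> H" using ai y by blast
    have e1: "((y, g y), (s y, g y \<noteq> f y)) \<in> EE"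
      unfolding EE_def by (rule symc_base) (simp add: Rel_iff HH_def ss_def y)
    have e2: "((y, g y), (a y, g y \<noteq> f y)) \<in> EE"
      unfolding EE_def by (rule symc_base) (simp add: Rel_iff HH_def aa_def y)
    have rs: "r (s y) = r y"
    proof -
      have "(y, s y) \<in> E" unfolding E_def by (rule symc_base) (simp add: Rel_iff y)
      then show ?thesis using r_eq by metis
    qed
    have ra: "r (a y) = r y"
    proof -
      have "(y, a y) \<in> E" unfolding E_def by (rule symc_base) (simp add: Rel_iff y)
      then show ?thesis using r_eq by metis
    qed
    have "((s y, g y \<noteq> f y), (r (s y), False)) \<in> EE"
      using symc_trans[OF symc_sym[OF e1[unfolded EE_def]] gkey[OF y, unfolded EE_def]] rs unfolding EE_def by simp
    then have 1: "g (s y) = (g y \<noteq> f y)" using guniq[OF sy] by metis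
    have "((a y, g y \<noteq> f y), (r (a y), False)) \<in> EE"
      using symc_trans[OF symc_sym[OF e2[unfolded EE_def]] gkey[OF y, unfolded EE_def]] ra unfolding EE_def by simp
    then have 2: "g (a y) = (g y \<noteq> f y)" using guniq[OF ay] by metis
    show "g (s y) = (g y \<noteq> f y) \<and> g (a y) = (g y \<noteq> f y)" using 1 2 by simp
  qed
  then show ?thesis by blast
qed

locale tfp =
  fixes H :: "'d set" and alpha :: "'d \<Rightarrow> 'd" and vert :: "'d \<Rightarrow> 'v"
    and sigma :: "'d \<Rightarrow> 'd" and M :: "'d set set"
  assumes heg: "half_edge_graph H alpha"
    and triv: "trivalent H vert"
    and pm: "perfect_matching H alpha vert M"
    and prs: "planar_rotation_system H alpha vert sigma"
begin

lemma fin: "finite H" using heg by (simp add: half_edge_graph_def)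
lemma aH: "d \<in> H \<Longrightarrow> alpha d \<in> H" using heg by (simp add: half_edge_graph_def)
lemma a_ne: "d \<in> H \<Longrightarrow> alpha d \<noteq> d" using heg by (simp add: half_edge_graph_def)
lemma aa: "d \<in> H \<Longrightarrow> alpha (alpha d) = d" using heg by (simp add: half_edge_graph_def)
lemma ai: "\<forall>y\<in>H. alpha y \<in> H \<and> alpha (alpha y) = y \<and> alpha y \<noteq> y" using aH aa a_ne by blast

lemma rot: "rotation_system H vert sigma" using prs by (simp add: planar_rotation_system_def)
lemma sbij: "bij_betw sigma H H" using rot by (simp add: rotation_system_def)
lemma sH: "d \<in> H \<Longrightarrow> sigma d \<in> H" using sbij by (auto simp: bij_betw_def)
lemma s_inj: "d \<in> H \<Longrightarrow> d' \<in> H \<Longrightarrow> sigma d = sigma d' \<Longrightarrow> d = d'"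
  using sbij by (auto simp: bij_betw_def inj_on_def)
lemma orb: "d \<in> H \<Longrightarrow> {(sigma ^^ n) d | n. True} = darts_at H vert (vert d)"
  using rot by (simp add: rotation_system_def)
lemma card3: "d \<in> H \<Longrightarrow> card (darts_at H vert (vert d)) = 3"
  using triv by (simp add: trivalent_def)

lemma orb_mem: "d \<in> H \<Longrightarrow> (sigma ^^ n) d \<in> darts_at H vert (vert d)"
  using orb by blast

lemma vs: "d \<in> H \<Longrightarrow> vert (sigma d) = vert d"
  using orb_mem[of d 1] by (simp add: darts_at_def)

lemma s_ne1: assumes d: "d \<in> H" shows "sigma d \<noteq> d"
proof
  assume e: "sigma d = d"
  have "(sigma ^^ n) d = d" for n by (induction n) (simp_all add: e)
  then have "{(sigma ^^ n) d | n. True} = {d}" by auto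
  then have "darts_at H vert (vert d) = {d}" using orb[OF d] by simp
  then show False using card3[OF d] by simp
qed

lemma s_ne2: assumes d: "d \<in> H" shows "sigma (sigma d) \<noteq> d"
proof
  assume e: "sigma (sigma d) = d"
  have "(sigma ^^ n) d \<in> {d, sigma d}" for n
  proof (induction n)
    case 0 then show ?case by simp
  next
    case (Suc n) then show ?case using e by auto
  qed
  then have "{(sigma ^^ n) d | n. True} \<subseteq> {d, sigma d}" by auto
  then have "card (darts_at H vert (vert d)) \<le> card {d, sigma d}"
    using orb[OF d] by (simp add: card_mono)
  also have "\<dots> \<le> 2" by (simp add: card_insert_le_m1)
  finally show False using card3[OF d] by simp
qed

lemma s_ne3: assumes d: "d \<in> H" shows "sigma (sigma d) \<noteq> sigma d"
  using s_inj[OF sH[OF d] d] s_ne1[OF d] by blast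

lemma darts3: assumes d: "d \<in> H" shows "darts_at H vert (vert d) = {d, sigma d, sigma (sigma d)}"
proof -
  have sub: "{d, sigma d, sigma (sigma d)} \<subseteq> darts_at H vert (vert d)"
    using orb_mem[OF d, of 0] orb_mem[OF d, of 1] orb_mem[OF d, of 2] by (simp add: numeral_2_eq_2)
  have c: "card {d, sigma d, sigma (sigma d)} = 3"
    using s_ne1[OF d] s_ne2[OF d] s_ne3[OF d] by auto
  have "finite (darts_at H vert (vert d))" using fin by (simp add: darts_at_def)
  then show ?thesis using card_subset_eq[OF _ sub] c card3[OF d] by simp
qed

lemma s3: assumes d: "d \<in> H" shows "sigma (sigma (sigma d)) = d"
proof -
  have "(sigma ^^ 3) d \<in> {d, sigma d, sigma (sigma d)}" using orb_mem[OF d, of 3] darts3[OF d] by simp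
  then have m: "sigma (sigma (sigma d)) \<in> {d, sigma d, sigma (sigma d)}" by (simp add: numeral_3_eq_3)
  have h1: "sigma d \<in> H" "sigma (sigma d) \<in> H" using sH d by auto
  have "sigma (sigma (sigma d)) \<noteq> sigma d"
    using s_inj[OF h1(2) d] s_ne2[OF d] by blast
  moreover have "sigma (sigma (sigma d)) \<noteq> sigma (sigma d)"
    using s_ne1[OF h1(2)] .
  ultimately show ?thesis using m by blast
qed

lemma same_vert: assumes d: "d \<in> H" and d': "d' \<in> H" and v: "vert d' = vert d"
  shows "d' = d \<or> d' = sigma d \<or> d' = sigma (sigma d)"
proof -
  have "d' \<in> darts_at H vert (vert d)" using d' v by (simp add: darts_at_def)
  then show ?thesis using darts3[OF d] by simp
qed

definition UM where "UM = \<Union>M"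
definition N where "N = H - UM"

lemma M_sub: "M \<subseteq> graph_edges H alpha" using pm by (simp add: perfect_matching_def)

lemma UMH: "UM \<subseteq> H"
  using M_sub aH by (auto simp: UM_def graph_edges_def)

lemma edgeM: assumes m: "m \<in> UM" shows "{m, alpha m} \<in> M"
proof -
  obtain e where e: "e \<in> M" "m \<in> e" using m by (auto simp: UM_def)
  then obtain d where d: "d \<in> H" "e = {d, alpha d}" using M_sub by (auto simp: graph_edges_def)
  show ?thesis
  proof (cases "m = d")
    case True then show ?thesis using e d by simp
  next
    case False
    then have "m = alpha d" using e d by simp
    then have "alpha m = d" using aa[OF d(1)] by simp
    then have "e = {m, alpha m}" using d \<open>m = alpha d\<close> by auto
    then show ?thesis using e by simp
  qed
qed

lemma aUM: "m \<in> UM \<Longrightarrow> alpha m \<in> UM"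
  using edgeM by (auto simp: UM_def)

lemma one: "d \<in> H \<Longrightarrow> card (darts_at UM vert (vert d)) = 1"
  using pm by (auto simp: perfect_matching_def sub_degree_def UM_def)

lemma mate_ex: assumes d: "d \<in> H" shows "\<exists>!m. m \<in> UM \<and> vert m = vert d"
proof -
  obtain m where "darts_at UM vert (vert d) = {m}" using one[OF d] card_1_singletonE by blast
  then have "\<forall>x. (x \<in> UM \<and> vert x = vert d) \<longleftrightarrow> x = m" by (auto simp: darts_at_def)
  then show ?thesis by (intro ex1I[of _ m]) blast+
qed

definition mate where "mate d = (THE m. m \<in> \<Union>M \<and> vert m = vert d)"

lemma mate: assumes d: "d \<in> H" shows "mate d \<in> UM" "vert (mate d) = vert d"
  using theI'[OF mate_ex[OF d]] unfolding mate_def UM_def by auto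

lemma mate_uniq: assumes d: "d \<in> H" and m: "m \<in> UM" "vert m = vert d" shows "mate d = m"
  using the1_equality[OF mate_ex[OF d]] m unfolding mate_def UM_def by auto

lemma mate_UM: "m \<in> UM \<Longrightarrow> mate m = m"
  using mate_uniq UMH by blast

lemma vert_a: assumes m: "m \<in> UM" shows "vert (alpha m) \<noteq> vert m"
proof
  assume "vert (alpha m) = vert m"
  have mH: "m \<in> H" using m UMH by blast
  then have "mate m = alpha m" using mate_uniq[OF mH aUM[OF m]] \<open>vert (alpha m) = vert m\<close> by simp
  then show False using mate_UM[OF m] a_ne[OF mH] by simp
qed

lemma Nsig: assumes m: "m \<in> UM" shows "sigma m \<in> N" "sigma (sigma m) \<in> N"
proof -
  have mH: "m \<in> H" using m UMH by blast
  have h: "sigma m \<in> H" "sigma (sigma m) \<in> H" using sH mH by auto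
  have v: "vert (sigma m) = vert m" "vert (sigma (sigma m)) = vert m" using vs mH h by auto
  have "sigma m \<notin> UM"
  proof
    assume "sigma m \<in> UM"
    then have "mate m = sigma m" using mate_uniq[OF mH] v by simp
    then show False using mate_UM[OF m] s_ne1[OF mH] by simp
  qed
  moreover have "sigma (sigma m) \<notin> UM"
  proof
    assume "sigma (sigma m) \<in> UM"
    then have "mate m = sigma (sigma m)" using mate_uniq[OF mH] v by simp
    then show False using mate_UM[OF m] s_ne2[OF mH] by simp
  qed
  ultimately show "sigma m \<in> N" "sigma (sigma m) \<in> N" using h by (auto simp: N_def)
qed

lemma Ndec: assumes d: "d \<in> N" shows "d = sigma (mate d) \<or> d = sigma (sigma (mate d))"
proof -
  have dH: "d \<in> H" using d by (simp add: N_def)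
  have m: "mate d \<in> UM" "vert (mate d) = vert d" using mate[OF dH] by auto
  have mH: "mate d \<in> H" using m UMH by blast
  have "d = mate d \<or> d = sigma (mate d) \<or> d = sigma (sigma (mate d))"
    using same_vert[OF mH dH] m(2) by simp
  moreover have "d \<noteq> mate d" using d m(1) by (auto simp: N_def)
  ultimately show ?thesis by blast
qed

lemma NH: "d \<in> N \<Longrightarrow> d \<in> H" by (simp add: N_def)

lemma aN: assumes d: "d \<in> N" shows "alpha d \<in> N"
proof -
  have dH: "d \<in> H" using d by (simp add: N_def)
  have "alpha d \<notin> UM"
  proof
    assume "alpha d \<in> UM"
    then have "alpha (alpha d) \<in> UM" by (rule aUM)
    then show False using aa[OF dH] d by (simp add: N_def)
  qed
  then show ?thesis using aH[OF dH] by (simp add: N_def)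
qed

lemma mate_sig: assumes m: "m \<in> UM" shows "mate (sigma m) = m" "mate (sigma (sigma m)) = m"
proof -
  have mH: "m \<in> H" using m UMH by blast
  have h: "sigma m \<in> H" "sigma (sigma m) \<in> H" using sH mH by auto
  have v: "vert (sigma m) = vert m" "vert (sigma (sigma m)) = vert m" using vs mH h by auto
  show "mate (sigma m) = m" using mate_uniq[OF h(1) m] v by simp
  show "mate (sigma (sigma m)) = m" using mate_uniq[OF h(2) m] v by simp
qed

end

lemma respect_const:
  assumes c: "\<forall>p\<in>R. c (fst p) = c (snd p)" and xy: "(x, y) \<in> symc R"
  shows "c x = c y"
proof -
  from xy have "(x, y) \<in> (R \<union> R\<inverse>)\<^sup>*" by (simp add: symc_def)
  then show ?thesis
  proof (induction rule: rtrancl_induct)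
    case base then show ?case by simp
  next
    case (step y z)
    from step(2) have "c y = c z" using c by auto
    then show ?case using step(3) by simp
  qed
qed

lemma card_respect:
  assumes fin: "finite A" and RA: "R \<subseteq> A \<times> A"
  shows "card {c \<in> A \<rightarrow>\<^sub>E (UNIV :: bool set). \<forall>p\<in>R. c (fst p) = c (snd p)} = 2 ^ qn A R"
proof -
  define S where "S = {c \<in> A \<rightarrow>\<^sub>E (UNIV :: bool set). \<forall>p\<in>R. c (fst p) = c (snd p)}"
  define Q where "Q = A // symc R"
  define rep where "rep = (\<lambda>K::'a set. SOME z. z \<in> K)"
  define Phi where "Phi = (\<lambda>c::'a \<Rightarrow> bool. restrict (\<lambda>K. c (rep K)) Q)"
  define Psi where "Psi = (\<lambda>ph::'a set \<Rightarrow> bool. restrict (\<lambda>x. ph (cls R x)) A)"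
  have repcls: "(x, rep (cls R x)) \<in> symc R" for x
  proof -
    have "x \<in> cls R x" by (simp add: in_cls)
    then have "rep (cls R x) \<in> cls R x" unfolding rep_def by (rule someI)
    then show ?thesis by (simp add: in_cls)
  qed
  have repA: "x \<in> A \<Longrightarrow> rep (cls R x) \<in> A" for x
    using symc_closed[OF RA repcls] by blast
  have finQ: "finite Q" unfolding Q_def quotient_cls using fin by simp
  have "bij_betw Phi S (Q \<rightarrow>\<^sub>E (UNIV :: bool set))"
  proof (rule bij_betw_byWitness[of S Psi])
    show "\<forall>c\<in>S. Psi (Phi c) = c"
    proof
      fix c assume c: "c \<in> S"
      show "Psi (Phi c) = c"
      proof (rule ext)
        fix x
        show "Psi (Phi c) x = c x"
        proof (cases "x \<in> A")
          case True
          have "cls R x \<in> Q" unfolding Q_def quotient_cls using True by simp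
          then have "Psi (Phi c) x = c (rep (cls R x))" unfolding Psi_def Phi_def using True by simp
          also have "\<dots> = c x" using respect_const[OF _ repcls, of c x] c unfolding S_def by simp
          finally show ?thesis .
        next
          case False then show ?thesis using c unfolding S_def Psi_def by (simp add: PiE_def extensional_def)
        qed
      qed
    qed
    show "\<forall>ph\<in>Q \<rightarrow>\<^sub>E UNIV. Phi (Psi ph) = ph"
    proof
      fix ph :: "'a set \<Rightarrow> bool" assume ph: "ph \<in> Q \<rightarrow>\<^sub>E UNIV"
      show "Phi (Psi ph) = ph"
      proof (rule ext)
        fix K
        show "Phi (Psi ph) K = ph K"
        proof (cases "K \<in> Q")
          case True
          then obtain x where x: "x \<in> A" "K = cls R x" unfolding Q_def quotient_cls by auto
          have "Phi (Psi ph) K = ph (cls R (rep K))" unfolding Phi_def Psi_def using True x repA by simp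
          also have "cls R (rep K) = K" using x repcls[of x] cls_eq_iff[of R x "rep (cls R x)"] by simp
          finally show ?thesis .
        next
          case False then show ?thesis using ph unfolding Phi_def by (simp add: PiE_def extensional_def)
        qed
      qed
    qed
    show "Phi ` S \<subseteq> Q \<rightarrow>\<^sub>E UNIV" unfolding Phi_def by auto
    show "Psi ` (Q \<rightarrow>\<^sub>E UNIV) \<subseteq> S"
    proof
      fix c assume "c \<in> Psi ` (Q \<rightarrow>\<^sub>E UNIV)"
      then obtain ph where c: "c = Psi ph" by blast
      have "\<forall>p\<in>R. c (fst p) = c (snd p)"
      proof
        fix p assume p: "p \<in> R"
        then have pa: "fst p \<in> A" "snd p \<in> A" using RA by auto
        have "(fst p, snd p) \<in> symc R" using p symc_subI[of R] by auto
        then have "cls R (fst p) = cls R (snd p)" by (simp add: cls_eq_iff)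
        then show "c (fst p) = c (snd p)" unfolding c Psi_def using pa by simp
      qed
      moreover have "c \<in> A \<rightarrow>\<^sub>E UNIV" unfolding c Psi_def by simp
      ultimately show "c \<in> S" unfolding S_def by simp
    qed
  qed
  then have "card S = card (Q \<rightarrow>\<^sub>E (UNIV :: bool set))" by (rule bij_betw_same_card)
  also have "\<dots> = 2 ^ card Q" using card_funcsetE[OF finQ, of "UNIV :: bool set"] by simp
  finally show ?thesis unfolding S_def Q_def qn_def .
qed

context tfp begin

definition rS where "rS S d = res_partner alpha vert sigma M S d"

lemma rS_sig: assumes m: "m \<in> UM"
  shows "rS S (sigma m) = (if {m, alpha m} \<in> S then sigma (alpha m) else sigma (sigma (alpha m)))"
proof -
  have "mate (sigma m) = m" by (rule mate_sig(1)[OF m])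
  then show ?thesis unfolding rS_def res_partner_def Let_def mate_def[symmetric] by simp
qed

lemma rS_sig2: assumes m: "m \<in> UM"
  shows "rS S (sigma (sigma m)) = (if {m, alpha m} \<in> S then sigma (sigma (alpha m)) else sigma (alpha m))"
proof -
  have mH: "m \<in> H" using m UMH by blast
  have "mate (sigma (sigma m)) = m" by (rule mate_sig(2)[OF m])
  moreover have "sigma (sigma m) \<noteq> sigma m" by (rule s_ne3[OF mH])
  ultimately show ?thesis unfolding rS_def res_partner_def Let_def mate_def[symmetric] by simp
qed

lemma rS_N: assumes d: "d \<in> N" shows "rS S d \<in> N"
proof -
  have dH: "d \<in> H" using d by (rule NH)
  define m where "m = mate d"
  have m: "m \<in> UM" unfolding m_def using mate[OF dH] by simp
  have am: "alpha m \<in> UM" using aUM[OF m] .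
  have "d = sigma m \<or> d = sigma (sigma m)" unfolding m_def using Ndec[OF d] .
  then show ?thesis
  proof
    assume "d = sigma m" then show ?thesis using rS_sig[OF m, of S] Nsig[OF am] by simp
  next
    assume "d = sigma (sigma m)" then show ?thesis using rS_sig2[OF m, of S] Nsig[OF am] by simp
  qed
qed

lemma num_curves_qn: "num_curves H alpha vert sigma M S = qn N (Rel N alpha \<union> Rel N (rS S))"
proof -
  have "{(d, alpha d) | d. d \<in> N} \<union> {(alpha d, d) | d. d \<in> N} \<union> {(d, rS S d) | d. d \<in> N} \<union> {(rS S d, d) | d. d \<in> N}
        = (Rel N alpha \<union> Rel N (rS S)) \<union> (Rel N alpha \<union> Rel N (rS S))\<inverse>"
    by (auto simp: Rel_def)
  then show ?thesis
    unfolding num_curves_def Let_def qn_def symc_def N_def[unfolded UM_def, symmetric] rS_def[abs_def]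
    by simp
qed

definition aok :: "('d \<Rightarrow> bool) \<Rightarrow> bool" where "aok c \<longleftrightarrow> (\<forall>d\<in>N. c d = c (alpha d))"

definition arcok :: "'d set \<Rightarrow> bool \<Rightarrow> ('d \<Rightarrow> bool) \<Rightarrow> bool" where "arcok e b c \<longleftrightarrow> (\<forall>m\<in>e.
   c (sigma m) = c (if b then sigma (alpha m) else sigma (sigma (alpha m))) \<and>
   c (sigma (sigma m)) = c (if b then sigma (sigma (alpha m)) else sigma (alpha m)))"

definition Col where "Col S = {c \<in> N \<rightarrow>\<^sub>E (UNIV :: bool set). \<forall>p\<in>Rel N alpha \<union> Rel N (rS S). c (fst p) = c (snd p)}"

lemma finN: "finite N" using fin by (simp add: N_def)

lemma nc_card: "2 ^ num_curves H alpha vert sigma M S = card (Col S)"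
proof -
  have "Rel N alpha \<union> Rel N (rS S) \<subseteq> N \<times> N" using aN rS_N by (auto simp: Rel_def)
  then show ?thesis unfolding num_curves_qn Col_def using card_respect[OF finN] by simp
qed

lemma edge_eq: assumes e: "e \<in> M" and m: "m \<in> e" shows "e = {m, alpha m}"
proof -
  obtain d where d: "d \<in> H" "e = {d, alpha d}" using e M_sub by (auto simp: graph_edges_def)
  show ?thesis
  proof (cases "m = d")
    case True then show ?thesis using d by simp
  next
    case False
    then have "m = alpha d" using m d by simp
    then have "alpha m = d" using aa[OF d(1)] by simp
    then show ?thesis using d \<open>m = alpha d\<close> by auto
  qed
qed

lemma UM_in: "e \<in> M \<Longrightarrow> m \<in> e \<Longrightarrow> m \<in> UM" by (auto simp: UM_def)

lemma resp_iff:
  "(\<forall>p\<in>Rel N alpha \<union> Rel N (rS S). c (fst p) = c (snd p)) \<longleftrightarrow> aok c \<and> (\<forall>e\<in>M. arcok e (e \<in> S) c)"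
proof -
  have 1: "(\<forall>p\<in>Rel N alpha. c (fst p) = c (snd p)) \<longleftrightarrow> aok c" by (auto simp: aok_def Rel_def)
  have 2: "(\<forall>p\<in>Rel N (rS S). c (fst p) = c (snd p)) \<longleftrightarrow> (\<forall>d\<in>N. c d = c (rS S d))" by (auto simp: Rel_def)
  have 3: "(\<forall>d\<in>N. c d = c (rS S d)) \<longleftrightarrow> (\<forall>e\<in>M. arcok e (e \<in> S) c)"
  proof
    assume h: "\<forall>d\<in>N. c d = c (rS S d)"
    show "\<forall>e\<in>M. arcok e (e \<in> S) c"
    proof (intro ballI)
      fix e assume e: "e \<in> M"
      show "arcok e (e \<in> S) c" unfolding arcok_def
      proof (intro ballI)
        fix m assume m: "m \<in> e"
        have mU: "m \<in> UM" using UM_in[OF e m] .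
        have ee: "e = {m, alpha m}" using edge_eq[OF e m] .
        have a: "c (sigma m) = c (rS S (sigma m))" using h Nsig(1)[OF mU] by blast
        have b: "c (sigma (sigma m)) = c (rS S (sigma (sigma m)))" using h Nsig(2)[OF mU] by blast
        show "c (sigma m) = c (if e \<in> S then sigma (alpha m) else sigma (sigma (alpha m))) \<and>
              c (sigma (sigma m)) = c (if e \<in> S then sigma (sigma (alpha m)) else sigma (alpha m))"
          using a b rS_sig[OF mU, of S] rS_sig2[OF mU, of S] ee by simp
      qed
    qed
  next
    assume h: "\<forall>e\<in>M. arcok e (e \<in> S) c"
    show "\<forall>d\<in>N. c d = c (rS S d)"
    proof
      fix d assume d: "d \<in> N"
      have dH: "d \<in> H" using d by (rule NH)
      define m where "m = mate d"
      have mU: "m \<in> UM" unfolding m_def using mate[OF dH] by simp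
      have eM: "{m, alpha m} \<in> M" using edgeM[OF mU] .
      have "arcok {m, alpha m} ({m, alpha m} \<in> S) c" using h eM by blast
      then have ar: "c (sigma m) = c (if {m, alpha m} \<in> S then sigma (alpha m) else sigma (sigma (alpha m))) \<and>
              c (sigma (sigma m)) = c (if {m, alpha m} \<in> S then sigma (sigma (alpha m)) else sigma (alpha m))"
        unfolding arcok_def by blast
      have "d = sigma m \<or> d = sigma (sigma m)" unfolding m_def using Ndec[OF d] .
      then show "c d = c (rS S d)"
      proof
        assume "d = sigma m" then show ?thesis using ar rS_sig[OF mU, of S] by simp
      next
        assume "d = sigma (sigma m)" then show ?thesis using ar rS_sig2[OF mU, of S] by simp
      qed
    qed
  qed
  show ?thesis using 1 2 3 by blast
qed

end

lemma bool4_factor: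
  fixes A B C D :: bool
  shows "(if A = D \<and> B = C then 1 else 0) - (if A = C \<and> B = D then 1 else 0)
       = (if A \<noteq> B \<and> C \<noteq> D then (if A = C \<and> B = D then -1 else 1) else (0::real))"
  by (cases A; cases B; cases C; cases D) auto

lemma prod_ind: "finite X \<Longrightarrow> (\<Prod>x\<in>X. if P x then 1 else 0 :: real) = (if \<forall>x\<in>X. P x then 1 else 0)"
  by (induction X rule: finite_induct) auto

lemma prod_if_zero: "finite X \<Longrightarrow> (\<Prod>x\<in>X. if P x then f x else 0 :: real) = (if \<forall>x\<in>X. P x then (\<Prod>x\<in>X. f x) else 0)"
  by (induction X rule: finite_induct) auto

lemma prod_neg: "finite X \<Longrightarrow> (\<Prod>x\<in>X. - f x :: real) = (-1) ^ card X * (\<Prod>x\<in>X. f x)"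
  by (induction X rule: finite_induct) auto

lemma card_filter_sum: "finite A \<Longrightarrow> real (card {x\<in>A. P x}) = (\<Sum>x\<in>A. if P x then 1 else 0)"
proof -
  assume fA: "finite A"
  have "real (card {x\<in>A. P x}) = (\<Sum>x\<in>{x\<in>A. P x}. 1)" by simp
  also have "\<dots> = (\<Sum>x\<in>A. if P x then 1 else 0)" using sum.inter_filter[OF fA, of "\<lambda>_. 1::real" P] by simp
  finally show ?thesis .
qed

context tfp begin

definition goodAt :: "'d set \<Rightarrow> ('d \<Rightarrow> bool) \<Rightarrow> bool" where "goodAt e c \<longleftrightarrow> (\<forall>m\<in>e. c (sigma m) \<noteq> c (sigma (sigma m)))"

lemma arcok_m: assumes e: "e \<in> M" and m: "m \<in> e"
  shows "arcok e b c \<longleftrightarrow> (c (sigma m) = c (if b then sigma (alpha m) else sigma (sigma (alpha m))) \<and>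
                           c (sigma (sigma m)) = c (if b then sigma (sigma (alpha m)) else sigma (alpha m)))"
proof -
  have ee: "e = {m, alpha m}" by (rule edge_eq[OF e m])
  have mH: "m \<in> H" using UM_in[OF e m] UMH by blast
  have "alpha (alpha m) = m" by (rule aa[OF mH])
  then show ?thesis unfolding arcok_def ee by auto
qed

lemma goodAt_m: assumes e: "e \<in> M" and m: "m \<in> e"
  shows "goodAt e c \<longleftrightarrow> c (sigma m) \<noteq> c (sigma (sigma m)) \<and> c (sigma (alpha m)) \<noteq> c (sigma (sigma (alpha m)))"
proof -
  have ee: "e = {m, alpha m}" by (rule edge_eq[OF e m])
  show ?thesis unfolding goodAt_def ee by auto
qed

lemma M_ne: "e \<in> M \<Longrightarrow> \<exists>m. m \<in> e"
  using M_sub by (auto simp: graph_edges_def)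

lemma factor: assumes e: "e \<in> M"
  shows "(if arcok e False c then 1 else 0) - (if arcok e True c then 1 else 0)
       = (if goodAt e c then (if arcok e True c then -1 else 1) else (0::real))"
proof -
  obtain m where m: "m \<in> e" using M_ne[OF e] by blast
  define A where "A = c (sigma m)"
  define B where "B = c (sigma (sigma m))"
  define C where "C = c (sigma (alpha m))"
  define D where "D = c (sigma (sigma (alpha m)))"
  have F: "arcok e False c \<longleftrightarrow> (A = D \<and> B = C)"
    using arcok_m[OF e m, of False c] by (simp only: if_False A_def B_def C_def D_def)
  have T: "arcok e True c \<longleftrightarrow> (A = C \<and> B = D)"
    using arcok_m[OF e m, of True c] by (simp only: if_True A_def B_def C_def D_def)
  have G: "goodAt e c \<longleftrightarrow> (A \<noteq> B \<and> C \<noteq> D)"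
    using goodAt_m[OF e m, of c] by (simp only: A_def B_def C_def D_def)
  show ?thesis unfolding F T G by (rule bool4_factor)
qed

lemma finM: "finite M"
proof -
  have "graph_edges H alpha = (\<lambda>d. {d, alpha d}) ` H" by (auto simp: graph_edges_def)
  then have "finite (graph_edges H alpha)" using fin by simp
  then show ?thesis using M_sub finite_subset by blast
qed

lemma inner_sum:
  "(\<Sum>S\<in>Pow M. (-1) ^ card S * (if aok c \<and> (\<forall>e\<in>M. arcok e (e \<in> S) c) then 1 else 0 :: real))
   = (if aok c then (\<Prod>e\<in>M. (if arcok e False c then 1 else 0) - (if arcok e True c then 1 else 0)) else 0)"
proof (cases "aok c")
  case False then show ?thesis by simp
next
  case True
  define f1 where "f1 = (\<lambda>e. - (if arcok e True c then 1 else 0 :: real))"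
  define f2 where "f2 = (\<lambda>e. (if arcok e False c then 1 else 0 :: real))"
  have "(\<Prod>e\<in>M. (if arcok e False c then 1 else 0) - (if arcok e True c then 1 else 0 :: real))
        = (\<Prod>e\<in>M. f1 e + f2 e)" unfolding f1_def f2_def by simp
  also have "\<dots> = (\<Sum>X\<in>Pow M. (\<Prod>e\<in>X. f1 e) * (\<Prod>e\<in>M - X. f2 e))" by (rule prod_add[OF finM])
  also have "\<dots> = (\<Sum>X\<in>Pow M. (-1) ^ card X * (if \<forall>e\<in>M. arcok e (e \<in> X) c then 1 else 0))"
  proof (rule sum.cong[OF refl])
    fix X assume X: "X \<in> Pow M"
    have fX: "finite X" using X finM finite_subset by auto
    have fMX: "finite (M - X)" using finM by simp
    have "(\<Prod>e\<in>X. f1 e) = (-1) ^ card X * (if \<forall>e\<in>X. arcok e True c then 1 else 0)"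
      unfolding f1_def prod_neg[OF fX] prod_ind[OF fX] ..
    moreover have "(\<Prod>e\<in>M - X. f2 e) = (if \<forall>e\<in>M - X. arcok e False c then 1 else 0)"
      unfolding f2_def prod_ind[OF fMX] ..
    moreover have "((\<forall>e\<in>X. arcok e True c) \<and> (\<forall>e\<in>M - X. arcok e False c)) \<longleftrightarrow> (\<forall>e\<in>M. arcok e (e \<in> X) c)"
    proof -
      have eq: "arcok e (e \<in> X) c = (if e \<in> X then arcok e True c else arcok e False c)" for e by simp
      show ?thesis unfolding eq using X by auto
    qed
    ultimately show "(\<Prod>e\<in>X. f1 e) * (\<Prod>e\<in>M - X. f2 e) = (-1) ^ card X * (if \<forall>e\<in>M. arcok e (e \<in> X) c then 1 else 0)"
      by (auto split: if_splits)
  qed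
  finally show ?thesis using True by simp
qed

lemma prod_factor:
  "(\<Prod>e\<in>M. (if arcok e False c then 1 else 0) - (if arcok e True c then 1 else 0 :: real))
   = (if \<forall>e\<in>M. goodAt e c then (\<Prod>e\<in>M. if arcok e True c then -1 else 1) else 0)"
proof -
  have "(\<Prod>e\<in>M. (if arcok e False c then 1 else 0) - (if arcok e True c then 1 else 0 :: real))
        = (\<Prod>e\<in>M. if goodAt e c then (if arcok e True c then -1 else 1) else 0)"
    using factor by (rule prod.cong[OF refl])
  also have "\<dots> = (if \<forall>e\<in>M. goodAt e c then (\<Prod>e\<in>M. if arcok e True c then -1 else 1) else 0)"
    by (rule prod_if_zero[OF finM])
  finally show ?thesis .
qed

definition AllC where "AllC = N \<rightarrow>\<^sub>E (UNIV :: bool set)"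

lemma finAllC: "finite AllC" unfolding AllC_def using finN by (simp add: finite_PiE)

lemma bracket_sum:
  "two_factor_bracket H alpha vert sigma M 1
   = (\<Sum>c\<in>AllC. if aok c \<and> (\<forall>e\<in>M. goodAt e c) then (\<Prod>e\<in>M. if arcok e True c then -1 else 1) else 0)"
proof -
  have "two_factor_bracket H alpha vert sigma M 1
        = (\<Sum>S\<in>Pow M. (-1) ^ card S * 2 ^ num_curves H alpha vert sigma M S)"
    unfolding two_factor_bracket_def by simp
  also have "\<dots> = (\<Sum>S\<in>Pow M. (-1) ^ card S * real (card (Col S)))"
    by (rule sum.cong[OF refl]) (simp add: nc_card[symmetric])
  also have "\<dots> = (\<Sum>S\<in>Pow M. \<Sum>c\<in>AllC. (-1) ^ card S * (if aok c \<and> (\<forall>e\<in>M. arcok e (e \<in> S) c) then 1 else 0))"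
  proof (rule sum.cong[OF refl])
    fix S assume "S \<in> Pow M"
    have "Col S = {c \<in> AllC. aok c \<and> (\<forall>e\<in>M. arcok e (e \<in> S) c)}"
      unfolding Col_def AllC_def using resp_iff by blast
    then have "real (card (Col S)) = (\<Sum>c\<in>AllC. if aok c \<and> (\<forall>e\<in>M. arcok e (e \<in> S) c) then 1 else 0)"
      using card_filter_sum[OF finAllC] by simp
    then show "(-1) ^ card S * real (card (Col S)) = (\<Sum>c\<in>AllC. (-1) ^ card S * (if aok c \<and> (\<forall>e\<in>M. arcok e (e \<in> S) c) then 1 else 0))"
      by (simp add: sum_distrib_left)
  qed
  also have "\<dots> = (\<Sum>c\<in>AllC. \<Sum>S\<in>Pow M. (-1) ^ card S * (if aok c \<and> (\<forall>e\<in>M. arcok e (e \<in> S) c) then 1 else 0))"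
    by (rule sum.swap)
  also have "\<dots> = (\<Sum>c\<in>AllC. if aok c then (\<Prod>e\<in>M. (if arcok e False c then 1 else 0) - (if arcok e True c then 1 else 0)) else 0)"
    by (rule sum.cong[OF refl]) (rule inner_sum)
  also have "\<dots> = (\<Sum>c\<in>AllC. if aok c \<and> (\<forall>e\<in>M. goodAt e c) then (\<Prod>e\<in>M. if arcok e True c then -1 else 1) else 0)"
    by (rule sum.cong[OF refl]) (simp add: prod_factor)
  finally show ?thesis .
qed

end

lemma prod_sign: "finite X \<Longrightarrow> (\<Prod>x\<in>X. if P x then -1 else 1 :: real) = (-1) ^ card {x\<in>X. P x}"
proof (induction X rule: finite_induct)
  case empty then show ?case by simp
next
  case (insert x F)
  have e: "{y \<in> insert x F. P y} = (if P x then insert x {y\<in>F. P y} else {y\<in>F. P y})" by auto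
  have "x \<notin> {y\<in>F. P y}" using insert by simp
  moreover have "finite {y\<in>F. P y}" using insert by simp
  ultimately show ?case using insert e by auto
qed

context tfp begin

lemma planar_qn: "2 * qn H (Rel H sigma) + 2 * qn H (Rel H (sigma \<circ> alpha)) = card H + 4 * qn H (Rel H sigma \<union> Rel H alpha)"
proof -
  have P: "int (card (vert ` H)) - int (card (graph_edges H alpha)) + int (card (perm_orbits H (sigma \<circ> alpha)))
     = 2 * int (card (map_components H alpha sigma))" using prs by (simp add: planar_rotation_system_def)
  have V: "card (vert ` H) = qn H (Rel H sigma)"
  proof -
    have "perm_orbits H sigma = (\<lambda>d. darts_at H vert (vert d)) ` H"
      unfolding perm_orbits_def using orb by auto
    also have "\<dots> = darts_at H vert ` (vert ` H)" by auto
    finally have po: "perm_orbits H sigma = darts_at H vert ` (vert ` H)" .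
    have "inj_on (darts_at H vert) (vert ` H)"
    proof (rule inj_onI)
      fix u v assume u: "u \<in> vert ` H" and v: "v \<in> vert ` H" and e: "darts_at H vert u = darts_at H vert v"
      obtain d where d: "d \<in> H" "u = vert d" using u by blast
      have "d \<in> darts_at H vert u" using d by (simp add: darts_at_def)
      then have "d \<in> darts_at H vert v" using e by simp
      then show "u = v" using d by (simp add: darts_at_def)
    qed
    then have "card (perm_orbits H sigma) = card (vert ` H)" unfolding po by (rule card_image)
    then show ?thesis using card_perm_orbits[OF fin sbij] by simp
  qed
  have abij: "bij_betw alpha H H" by (rule invol_bij) (use aH aa in blast)
  have E: "2 * card (graph_edges H alpha) = card H"
  proof -
    have "perm_orbits H alpha = graph_edges H alpha"
    proof -
      have "{(alpha ^^ n) d | n. True} = {d, alpha d}" if d: "d \<in> H" for d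
      proof -
        have "(alpha ^^ n) d = (if even n then d else alpha d)" for n
          by (rule invol_funpow[of alpha d]) (rule aa[OF d])
        then have "{(alpha ^^ n) d | n. True} = {(if even n then d else alpha d) | n::nat. True}" by simp
        also have "\<dots> = {d, alpha d}"
        proof (rule set_eqI, rule iffI)
          fix z assume "z \<in> {(if even n then d else alpha d) | n::nat. True}"
          then show "z \<in> {d, alpha d}" by (auto split: if_splits)
        next
          fix z assume "z \<in> {d, alpha d}"
          then consider "z = d" | "z = alpha d" by blast
          then show "z \<in> {(if even n then d else alpha d) | n::nat. True}"
          proof cases
            case 1 then show ?thesis by (intro CollectI exI[of _ "0::nat"]) simp
          next
            case 2 then show ?thesis by (intro CollectI exI[of _ "1::nat"]) simp
          qed
        qed
        finally show ?thesis .
      qed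
      then show ?thesis unfolding perm_orbits_def graph_edges_def by auto
    qed
    then show ?thesis using card_perm_orbits[OF fin abij] fpf_qn[OF fin ai] by simp
  qed
  have bsa: "bij_betw (sigma \<circ> alpha) H H" using abij sbij by (rule bij_betw_trans)
  have F: "card (perm_orbits H (sigma \<circ> alpha)) = qn H (Rel H (sigma \<circ> alpha))"
    by (rule card_perm_orbits[OF fin bsa])
  have C: "card (map_components H alpha sigma) = qn H (Rel H sigma \<union> Rel H alpha)"
    unfolding map_components_cls qn_def ..
  show ?thesis using P V E F C by linarith
qed

lemma sign:
  assumes cA: "c \<in> AllC" and ac: "aok c" and good: "\<forall>e\<in>M. goodAt e c"
  shows "(\<Prod>e\<in>M. if arcok e True c then -1 else 1 :: real) = 1"
proof -
  define f where "f = (\<lambda>d. d \<in> UM \<or> (d \<in> N \<and> c d))"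
  have gm: "c (sigma (sigma m)) = (\<not> c (sigma m))" if m: "m \<in> UM" for m
  proof -
    have e: "{m, alpha m} \<in> M" by (rule edgeM[OF m])
    have "goodAt {m, alpha m} c" using good e by blast
    then have "c (sigma m) \<noteq> c (sigma (sigma m))" using goodAt_m[OF e, of m c] by simp
    then show ?thesis by auto
  qed
  have fm: "f m" "f (sigma m) = c (sigma m)" "f (sigma (sigma m)) = (\<not> c (sigma m))" if m: "m \<in> UM" for m
  proof -
    show "f m" using m by (simp add: f_def)
    have n: "sigma m \<in> N" "sigma (sigma m) \<in> N" using Nsig[OF m] by auto
    then have "sigma m \<notin> UM" "sigma (sigma m) \<notin> UM" by (auto simp: N_def)
    then show "f (sigma m) = c (sigma m)" "f (sigma (sigma m)) = (\<not> c (sigma m))"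
      using n gm[OF m] by (simp_all add: f_def)
  qed
  have HUN: "y \<in> H \<Longrightarrow> y \<in> UM \<or> y \<in> N" for y by (auto simp: N_def)
  have fa: "\<forall>y\<in>H. f (alpha y) = f y"
  proof
    fix y assume y: "y \<in> H"
    show "f (alpha y) = f y"
    proof (cases "y \<in> UM")
      case True then show ?thesis using aUM by (simp add: f_def)
    next
      case False
      then have yN: "y \<in> N" using HUN[OF y] by blast
      have "alpha y \<in> N" by (rule aN[OF yN])
      then have "alpha y \<notin> UM" by (simp add: N_def)
      moreover have "c (alpha y) = c y" using ac yN by (simp add: aok_def)
      ultimately show ?thesis using False yN \<open>alpha y \<in> N\<close> by (simp add: f_def)
    qed
  qed
  define h where "h = (\<lambda>y. \<not> f (sigma y))"
  have pot: "\<forall>y\<in>H. h (sigma y) = (h y \<noteq> f y)"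
  proof
    fix y assume y: "y \<in> H"
    define m where "m = mate y"
    have mU: "m \<in> UM" unfolding m_def using mate[OF y] by simp
    have mH: "m \<in> H" using mU UMH by blast
    have "y = m \<or> y = sigma m \<or> y = sigma (sigma m)"
      using same_vert[OF mH y] mate[OF y] unfolding m_def by simp
    moreover have "sigma (sigma (sigma m)) = m" by (rule s3[OF mH])
    ultimately show "h (sigma y) = (h y \<noteq> f y)"
      unfolding h_def using fm[OF mU] by auto
  qed
  obtain g where g: "\<forall>y\<in>H. g (sigma y) = (g y \<noteq> f y) \<and> g (alpha y) = (g y \<noteq> f y)"
    using cover_potential[OF fin sbij ai fa pot planar_qn] by blast
  define b where "b = (\<lambda>m. if c (sigma m) then sigma (sigma m) else sigma m)"
  define eps where "eps = (\<lambda>x. if g x then -1 else 1 :: real)"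
  have gb: "g (b m) = (g m = c (sigma m))" if m: "m \<in> UM" for m
  proof -
    have mH: "m \<in> H" using m UMH by blast
    have s1: "sigma m \<in> H" using sH mH by blast
    have g1: "g (sigma m) = (\<not> g m)" using g mH fm(1)[OF m] by simp
    have g2: "g (sigma (sigma m)) = (g (sigma m) \<noteq> c (sigma m))" using g s1 fm(2)[OF m] by simp
    show ?thesis unfolding b_def using g1 g2 by auto
  qed
  have edge_val: "(if arcok e True c then -1 else 1) = eps (b m) * eps (b (alpha m))" if e: "e \<in> M" and m: "m \<in> e" for e m
  proof -
    have mU: "m \<in> UM" by (rule UM_in[OF e m])
    have mH: "m \<in> H" using mU UMH by blast
    have amU: "alpha m \<in> UM" by (rule aUM[OF mU])
    have ga: "g (alpha m) = (\<not> g m)" using g mH fm(1)[OF mU] by simp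
    have T: "arcok e True c \<longleftrightarrow> c (sigma m) = c (sigma (alpha m))"
      using arcok_m[OF e m, of True c] gm[OF mU] gm[OF amU] by auto
    have "g (b m) = (g m = c (sigma m))" by (rule gb[OF mU])
    moreover have "g (b (alpha m)) = ((\<not> g m) = c (sigma (alpha m)))" using gb[OF amU] ga by simp
    ultimately show ?thesis unfolding T eps_def by auto
  qed
  have disj: "e1 \<inter> e2 = {}" if "e1 \<in> M" "e2 \<in> M" "e1 \<noteq> e2" for e1 e2
  proof (rule ccontr)
    assume "e1 \<inter> e2 \<noteq> {}"
    then obtain x where "x \<in> e1" "x \<in> e2" by blast
    then have "e1 = {x, alpha x}" "e2 = {x, alpha x}" using edge_eq that by auto
    then show False using that by simp
  qed
  have finE: "\<forall>e\<in>M. finite e" using M_sub by (auto simp: graph_edges_def)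
  have "(\<Prod>e\<in>M. if arcok e True c then -1 else 1 :: real) = (\<Prod>e\<in>M. \<Prod>m\<in>e. eps (b m))"
  proof (rule prod.cong[OF refl])
    fix e assume e: "e \<in> M"
    obtain m where m: "m \<in> e" using M_ne[OF e] by blast
    have ee: "e = {m, alpha m}" by (rule edge_eq[OF e m])
    have mH: "m \<in> H" using UM_in[OF e m] UMH by blast
    have ne: "m \<noteq> alpha m" using a_ne[OF mH] by simp
    show "(if arcok e True c then -1 else 1) = (\<Prod>m\<in>e. eps (b m))"
      using edge_val[OF e m] ee ne by simp
  qed
  also have "\<dots> = (\<Prod>m\<in>UM. eps (b m))"
  proof -
    have disj': "\<forall>A\<in>M. \<forall>B\<in>M. A \<noteq> B \<longrightarrow> A \<inter> B = {}" using disj by blast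
    have "(\<Prod>m\<in>\<Union>M. eps (b m)) = (prod \<circ> prod) (\<lambda>m. eps (b m)) M"
      by (rule prod.Union_disjoint[OF finE disj'])
    then show ?thesis unfolding UM_def by simp
  qed
  also have "\<dots> = (\<Prod>d\<in>b ` UM. eps d)"
  proof -
    have inj: "inj_on b UM"
    proof (rule inj_onI)
      fix m1 m2 assume m1: "m1 \<in> UM" and m2: "m2 \<in> UM" and e: "b m1 = b m2"
      have m1H: "m1 \<in> H" and m2H: "m2 \<in> H" using m1 m2 UMH by auto
      have vb: "vert (b m) = vert m" if "m \<in> H" for m
        using vs[OF that] vs[OF sH[OF that]] unfolding b_def by simp
      have "vert m1 = vert m2" using vb[OF m1H] vb[OF m2H] e by simp
      then have "mate m1 = m2" using mate_uniq[OF m1H m2] by simp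
      then show "m1 = m2" using mate_UM[OF m1] by simp
    qed
    show ?thesis using prod.reindex[OF inj, of eps] by (simp add: comp_def)
  qed
  also have "b ` UM = {d\<in>N. \<not> c d}"
  proof (rule set_eqI, rule iffI)
    fix d assume "d \<in> b ` UM"
    then obtain m where m: "m \<in> UM" "d = b m" by blast
    show "d \<in> {d\<in>N. \<not> c d}" using m Nsig[OF m(1)] gm[OF m(1)] unfolding b_def by auto
  next
    fix d assume d: "d \<in> {d\<in>N. \<not> c d}"
    then have dN: "d \<in> N" and nc: "\<not> c d" by auto
    define m where "m = mate d"
    have mU: "m \<in> UM" unfolding m_def using mate[OF NH[OF dN]] by simp
    have "d = sigma m \<or> d = sigma (sigma m)" unfolding m_def by (rule Ndec[OF dN])
    then have "d = b m"
    proof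
      assume "d = sigma m" then show ?thesis using nc unfolding b_def by simp
    next
      assume ds: "d = sigma (sigma m)"
      then have "c (sigma m)" using nc gm[OF mU] by simp
      then show ?thesis using ds unfolding b_def by simp
    qed
    then show "d \<in> b ` UM" using mU by blast
  qed
  also have "(\<Prod>d\<in>{d\<in>N. \<not> c d}. eps d) = (-1) ^ card {d\<in>{d\<in>N. \<not> c d}. g d}"
    unfolding eps_def by (rule prod_sign) (simp add: finN)
  also have "\<dots> = 1"
  proof -
    define B where "B = {d\<in>{d\<in>N. \<not> c d}. g d}"
    have finB: "finite B" unfolding B_def using finN by simp
    have Bi: "\<forall>y\<in>B. alpha y \<in> B \<and> alpha (alpha y) = y \<and> alpha y \<noteq> y"
    proof
      fix y assume y: "y \<in> B"
      then have yN: "y \<in> N" and nc: "\<not> c y" and gy: "g y" unfolding B_def by auto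
      have yH: "y \<in> H" using yN by (rule NH)
      have aN': "alpha y \<in> N" by (rule aN[OF yN])
      have "c (alpha y) = c y" using ac yN by (simp add: aok_def)
      moreover have "\<not> f y" using yN nc by (simp add: f_def N_def)
      then have "g (alpha y) = g y" using g yH by simp
      ultimately have "alpha y \<in> B" using aN' nc gy unfolding B_def by simp
      then show "alpha y \<in> B \<and> alpha (alpha y) = y \<and> alpha y \<noteq> y" using aa[OF yH] a_ne[OF yH] by simp
    qed
    have "2 * qn B (Rel B alpha) = card B" by (rule fpf_qn[OF finB Bi])
    then have "even (card B)" by (metis dvd_triv_left)
    then show ?thesis unfolding B_def by simp
  qed
  finally show ?thesis .
qed

end

context tfp begin

lemma in_UF: assumes F: "F \<subseteq> graph_edges H alpha" and d: "d \<in> H"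
  shows "d \<in> \<Union>F \<longleftrightarrow> {d, alpha d} \<in> F"
proof
  assume "d \<in> \<Union>F"
  then obtain X where X: "X \<in> F" "d \<in> X" by blast
  then obtain d0 where d0: "d0 \<in> H" "X = {d0, alpha d0}" using F by (auto simp: graph_edges_def)
  have "X = {d, alpha d}"
  proof (cases "d = d0")
    case True then show ?thesis using d0 by simp
  next
    case False
    then have "d = alpha d0" using X d0 by simp
    then have "alpha d = d0" using aa[OF d0(1)] by simp
    then show ?thesis using d0 \<open>d = alpha d0\<close> by auto
  qed
  then show "{d, alpha d} \<in> F" using X by simp
next
  assume "{d, alpha d} \<in> F" then show "d \<in> \<Union>F" by blast
qed

lemma UF_H: "F \<subseteq> graph_edges H alpha \<Longrightarrow> \<Union>F \<subseteq> H"
  using aH by (auto simp: graph_edges_def)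

lemma deg_at: assumes F: "F \<subseteq> graph_edges H alpha" and m: "m \<in> H"
  shows "sub_degree F vert (vert m) = card ({m, sigma m, sigma (sigma m)} \<inter> \<Union>F)"
proof -
  have "darts_at (\<Union>F) vert (vert m) = darts_at H vert (vert m) \<inter> \<Union>F"
    using UF_H[OF F] by (auto simp: darts_at_def)
  then show ?thesis unfolding sub_degree_def darts3[OF m] by simp
qed

lemma card_three_cases: assumes m: "m \<in> H"
  shows "card ({m, sigma m, sigma (sigma m)} \<inter> X) =
    (if m \<in> X then 1 else 0) + (if sigma m \<in> X then 1 else 0) + (if sigma (sigma m) \<in> X then 1 else (0::nat))"
proof -
  have d: "m \<noteq> sigma m" "m \<noteq> sigma (sigma m)" "sigma m \<noteq> sigma (sigma m)"
    using s_ne1[OF m] s_ne2[OF m] s_ne3[OF m] by auto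
  show ?thesis using d by (cases "m \<in> X"; cases "sigma m \<in> X"; cases "sigma (sigma m) \<in> X") (auto simp: Int_insert_left)
qed

definition GC where "GC = {c \<in> AllC. aok c \<and> (\<forall>e\<in>M. goodAt e c)}"
definition toF where "toF c = M \<union> {{d, alpha d} | d. d \<in> N \<and> c d}"
definition toC where "toC F = restrict (\<lambda>d. {d, alpha d} \<in> F) N"

lemma vert_mate: "v \<in> vert ` H \<Longrightarrow> \<exists>m\<in>UM. v = vert m"
  using mate by (metis imageE)

lemma toF_in: assumes c: "c \<in> GC" shows "toF c \<in> two_factors_containing H alpha vert M"
proof -
  have ac: "aok c" and good: "\<forall>e\<in>M. goodAt e c" using c by (auto simp: GC_def)
  have sub: "toF c \<subseteq> graph_edges H alpha"
    unfolding toF_def using M_sub NH by (auto simp: graph_edges_def)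
  have U: "\<Union>(toF c) = UM \<union> {d\<in>N. c d}"
  proof (rule set_eqI, rule iffI)
    fix x assume "x \<in> \<Union>(toF c)"
    then obtain X where X: "X \<in> toF c" "x \<in> X" by blast
    show "x \<in> UM \<union> {d\<in>N. c d}"
    proof (cases "X \<in> M")
      case True then show ?thesis using X by (auto simp: UM_def)
    next
      case False
      then obtain d where d: "d \<in> N" "c d" "X = {d, alpha d}" using X(1) by (auto simp: toF_def)
      have "alpha d \<in> N" "c (alpha d)" using aN[OF d(1)] ac d by (auto simp: aok_def)
      then show ?thesis using X(2) d by auto
    qed
  next
    fix x assume "x \<in> UM \<union> {d\<in>N. c d}"
    then show "x \<in> \<Union>(toF c)" unfolding toF_def UM_def by blast
  qed
  have deg: "\<forall>v\<in>vert ` H. sub_degree (toF c) vert v = 2"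
  proof
    fix v assume "v \<in> vert ` H"
    then obtain m where m: "m \<in> UM" "v = vert m" using vert_mate by blast
    have mH: "m \<in> H" using m UMH by blast
    have e: "{m, alpha m} \<in> M" by (rule edgeM[OF m(1)])
    have gd: "c (sigma m) \<noteq> c (sigma (sigma m))" using good e goodAt_m[OF e, of m c] by auto
    have n: "sigma m \<in> N" "sigma (sigma m) \<in> N" using Nsig[OF m(1)] by auto
    have nU: "sigma m \<notin> UM" "sigma (sigma m) \<notin> UM" using n by (auto simp: N_def)
    have "sub_degree (toF c) vert v = card ({m, sigma m, sigma (sigma m)} \<inter> \<Union>(toF c))"
      unfolding m(2) by (rule deg_at[OF sub mH])
    also have "\<dots> = 2" unfolding card_three_cases[OF mH] U using m(1) n nU gd by auto
    finally show "sub_degree (toF c) vert v = 2" .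
  qed
  show ?thesis unfolding two_factors_containing_def using sub deg by (auto simp: toF_def)
qed

lemma toC_in: assumes F: "F \<in> two_factors_containing H alpha vert M" shows "toC F \<in> GC"
proof -
  have sub: "F \<subseteq> graph_edges H alpha" and deg: "\<forall>v\<in>vert ` H. sub_degree F vert v = 2" and MF: "M \<subseteq> F"
    using F by (auto simp: two_factors_containing_def)
  have "toC F \<in> AllC" unfolding toC_def AllC_def by simp
  moreover have "aok (toC F)"
    unfolding aok_def toC_def using aN aa NH by (auto simp: insert_commute)
  moreover have "\<forall>e\<in>M. goodAt e (toC F)"
  proof
    fix e assume e: "e \<in> M"
    show "goodAt e (toC F)" unfolding goodAt_def
    proof
      fix m assume me: "m \<in> e"
      have mU: "m \<in> UM" by (rule UM_in[OF e me])
      have mH: "m \<in> H" using mU UMH by blast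
      have n: "sigma m \<in> N" "sigma (sigma m) \<in> N" using Nsig[OF mU] by auto
      have mF: "m \<in> \<Union>F" using mU MF by (auto simp: UM_def)
      have "sub_degree F vert (vert m) = 2" using deg mH by blast
      then have "card ({m, sigma m, sigma (sigma m)} \<inter> \<Union>F) = 2" using deg_at[OF sub mH] by simp
      then have x: "(sigma m \<in> \<Union>F) \<noteq> (sigma (sigma m) \<in> \<Union>F)"
        unfolding card_three_cases[OF mH] using mF by (auto split: if_splits)
      have "toC F (sigma m) = (sigma m \<in> \<Union>F)" "toC F (sigma (sigma m)) = (sigma (sigma m) \<in> \<Union>F)"
        unfolding toC_def using n in_UF[OF sub NH[OF n(1)]] in_UF[OF sub NH[OF n(2)]] by auto
      then show "toC F (sigma m) \<noteq> toC F (sigma (sigma m))" using x by simp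
    qed
  qed
  ultimately show ?thesis unfolding GC_def by simp
qed

lemma toC_toF: assumes c: "c \<in> GC" shows "toC (toF c) = c"
proof (rule ext)
  fix d
  have cA: "c \<in> AllC" and ac: "aok c" using c by (auto simp: GC_def)
  show "toC (toF c) d = c d"
  proof (cases "d \<in> N")
    case False
    then show ?thesis using cA unfolding toC_def AllC_def by (simp add: PiE_def extensional_def)
  next
    case True
    have "{d, alpha d} \<notin> M"
    proof
      assume "{d, alpha d} \<in> M" then have "d \<in> UM" by (auto simp: UM_def)
      then show False using True by (simp add: N_def)
    qed
    moreover have "({d, alpha d} \<in> {{d', alpha d'} | d'. d' \<in> N \<and> c d'}) = c d"
    proof
      assume "{d, alpha d} \<in> {{d', alpha d'} | d'. d' \<in> N \<and> c d'}"
      then obtain d' where d': "d' \<in> N" "c d'" "{d, alpha d} = {d', alpha d'}" by blast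
      then have "d' = d \<or> d' = alpha d" by (metis doubleton_eq_iff)
      then show "c d" using d' ac True by (auto simp: aok_def)
    next
      assume "c d" then show "{d, alpha d} \<in> {{d', alpha d'} | d'. d' \<in> N \<and> c d'}" using True by blast
    qed
    ultimately show ?thesis unfolding toC_def toF_def using True by simp
  qed
qed

lemma toF_toC: assumes F: "F \<in> two_factors_containing H alpha vert M" shows "toF (toC F) = F"
proof -
  have sub: "F \<subseteq> graph_edges H alpha" and MF: "M \<subseteq> F"
    using F by (auto simp: two_factors_containing_def)
  show ?thesis
  proof (rule set_eqI, rule iffI)
    fix X assume "X \<in> toF (toC F)"
    then show "X \<in> F" unfolding toF_def toC_def using MF by auto
  next
    fix X assume X: "X \<in> F"
    then obtain d where d: "d \<in> H" "X = {d, alpha d}" using sub by (auto simp: graph_edges_def)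
    show "X \<in> toF (toC F)"
    proof (cases "X \<in> M")
      case True then show ?thesis by (simp add: toF_def)
    next
      case False
      have "d \<notin> UM" using edgeM False d by auto
      then have dN: "d \<in> N" using d by (simp add: N_def)
      then have "toC F d" unfolding toC_def using X d by simp
      then show ?thesis unfolding toF_def using dN d by blast
    qed
  qed
qed

lemma card_GC: "card GC = card (two_factors_containing H alpha vert M)"
proof -
  have "bij_betw toF GC (two_factors_containing H alpha vert M)"
    by (rule bij_betw_byWitness[of _ toC]) (use toC_toF toF_toC toF_in toC_in in auto)
  then show ?thesis by (rule bij_betw_same_card)
qed

lemma main: "two_factor_bracket H alpha vert sigma M 1 = real (card (two_factors_containing H alpha vert M))"
proof -
  have "two_factor_bracket H alpha vert sigma M 1
        = (\<Sum>c\<in>AllC. if aok c \<and> (\<forall>e\<in>M. goodAt e c) then (\<Prod>e\<in>M. if arcok e True c then -1 else 1) else 0)"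
    by (rule bracket_sum)
  also have "\<dots> = (\<Sum>c\<in>AllC. if aok c \<and> (\<forall>e\<in>M. goodAt e c) then 1 else 0)"
    by (rule sum.cong[OF refl]) (use sign in auto)
  also have "\<dots> = real (card GC)" unfolding GC_def by (rule card_filter_sum[symmetric, OF finAllC])
  finally show ?thesis using card_GC by simp
qed

end

theorem theorem1p2:
  fixes H :: "'d set" and alpha :: "'d \<Rightarrow> 'd" and vert :: "'d \<Rightarrow> 'v"
    and sigma :: "'d \<Rightarrow> 'd" and M :: "'d set set"
  assumes "half_edge_graph H alpha"
    and "trivalent H vert"
    and "perfect_matching H alpha vert M"
    and "planar_rotation_system H alpha vert sigma"
  shows "two_factor_bracket H alpha vert sigma M 1
         = real (card (two_factors_containing H alpha vert M))"
proof -
  interpret tfp H alpha vert sigma M using assms by (unfold_locales)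
  show ?thesis by (rule main)
qed


end
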